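(* Assume the setup of the context, with $d_R\ge 2$, a glue code $H_G$ compatible with the memory via pasting matrices $S\neq 0$, $T$, and $d$ the memory distance. (A) Suppose the glue code is finely devised for $\Sigma$, and consider the measurement-sticker deformed code. Then: (i) $\{hP^{\mathrm T}: h\in\mathrm{rs}H^{M\text{-}M}_X\}=\mathrm{rs}H_X$, where $hP^{\mathrm T}$ denotes the restriction of $h$ to the block $u_0$; (ii) for every $h\in\mathrm{rs}H_Z$, the vector equal to $h$ on $u_0$ and zero elsewhere lies in $\mathrm{rs}H^{M\text{-}M}_Z$; (iii) for every $x\in\mathrm{rs}J_X$ with $xJ_{Z,A}^{\mathrm T}=0$ there exists $x'\in\mathrm{rs}J^{M\text{-}M}_X$ whose restriction to $u_0$ equals $x$; (iv) for every $z\in\mathrm{rs}J_Z$, the vector equal to $z$ on $u_0$ and zero elsewhere lies in $\mathrm{rs}J^{M\text{-}M}_Z+\mathrm{rs}H^{M\text{-}M}_Z$; (v) for every $z\in\mathrm{rs}J_{Z,A}$, the vector equal to $z$ on $u_0$ and zero elsewhere lies in $\mathrm{rs}H^{M\text{-}M}_Z$; (vi) the distance of the measurement-sticker deformed code is at least $\min\{d/|S|,d_R\}$. (B) Suppose the glue code is coarsely devised for $\Sigma$, and consider the branch-sticker deformed code. Then (i) and (ii) hold with $H^{M\text{-}B}_X,H^{M\text{-}B}_Z$ in place of $H^{M\text{-}M}_X,H^{M\text{-}M}_Z$, and moreover: (iii') for every $x\in\mathrm{rs}J_X$ there exists $x'\in\mathrm{rs}J^{M\text{-}B}_X$ whose restriction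 to $u_0$ equals $x$; (iv') for every $z\in\mathrm{rs}J_Z$, the vector equal to $z$ on $u_0$ and zero elsewhere lies in $\mathrm{rs}J^{M\text{-}B}_Z$; (v') for every $z\in\mathrm{rs}J_{Z,A}$ there exists $g\in\mathrm{rs}H^{M\text{-}B}_Z$ such that (the vector equal to $z$ on $u_0$ and zero elsewhere) $+\,g$ is supported entirely in the open-boundary block $u_{d_R-1}$; (vi') the distance of the branch-sticker deformed code is at least $d/|S|$.
   Context: All vectors are row vectors over $\mathbb F_2$. For a matrix $A$, $\mathrm{rs}A$ is its row space and $\ker A=\{x: Ax^{\mathrm T}=0\}$; for a set $V$ of row vectors and a matrix $M$, $VM=\{vM:v\in V\}$. $|x|$ is the Hamming weight and $E_m$ the $m\times m$ identity. The memory is a CSS subsystem code specified by $H_X\in\mathbb F_2^{r_X\times n}$, $H_Z\in\mathbb F_2^{r_Z\times n}$, $J_X,J_Z\in\mathbb F_2^{k\times n}$, $F_X,F_Z\in\mathbb F_2^{k_g\times n}$ satisfying $\ker H_X=\mathrm{rs}H_Z\oplus\mathrm{rs}J_Z\oplus\mathrm{rs}F_Z$, $\ker H_Z=\mathrm{rs}H_X\oplus\mathrm{rs}J_X\oplus\mathrm{rs}F_X$, $J_XJ_Z^{\mathrm T}=E_k$, $F_XF_Z^{\mathrm T}=E_{k_g}$. For matrices $H,J$ with the same number of columns, $d(H,J)=\min\{|e|: e\in\ker H,\ Je^{\mathrm T}\neq0\}$; the memory distance is $d=\min\{d(H_X,J_X),d(H_Z,J_Z)\}$, and the distance of a deformed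 code with matrices $H^{dc}_X,H^{dc}_Z,J^{dc}_X,J^{dc}_Z$ is $\min\{d(H^{dc}_X,J^{dc}_X),d(H^{dc}_Z,J^{dc}_Z)\}$. For $S\in\mathbb F_2^{n_G\times n}$, $|S|=\max_{x\neq0}|xS|/|x|$. Let $v_1,\dots,v_q\in\mathrm{rs}J_Z$ be linearly independent (representing the operator set $\Sigma$), $J_{Z,A}$ the matrix with rows $v_1,\dots,v_q$; extend to a basis $v_1,\dots,v_k$ of $\mathrm{rs}J_Z$ and let $J_{Z,C}$ have rows $v_{q+1},\dots,v_k$. Let $\bar J_Z$ be the invertible $k\times k$ matrix with $\binom{J_{Z,A}}{J_{Z,C}}=\bar J_ZJ_Z$ and define $J_{X,A}\in\mathbb F_2^{q\times n}$, $J_{X,C}\in\mathbb F_2^{(k-q)\times n}$ by $\binom{J_{X,A}}{J_{X,C}}=(\bar J_Z^{-1})^{\mathrm T}J_X$. A glue code is a binary linear code with check matrix $H_G\in\mathbb F_2^{r_G\times n_G}$; it is compatible via pasting matrices $S\in\mathbb F_2^{n_G\times n}$, $T\in\mathbb F_2^{r_X\times r_G}$ if $H_XS^{\mathrm T}=TH_G$; it is coarsely devised for $\Sigma$ if $\mathrm{span}(v_1,\dots,v_q)\subseteq(\ker H_G)S$, and finely devised for $\Sigma$ if there exist $u_1,u_2,\dots\in\mathrm{rs}H_Z\oplus\mathrm{rs}F_Z$ with $\mathrm{span}(v_1,\dots,v_q,u_1,u_2,\dots)=(\ker H_G)S$. When finely devised, fix $\gamma\in\mathbb F_2^{(k-q)\times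 r_G}$ with $J_{X,C}S^{\mathrm T}=\gamma H_G$ (such $\gamma$ exists). Measurement-sticker deformed code: coordinates are split into blocks $u_0\in\mathbb F_2^n$, $u_1,\dots,u_{d_R-1}\in\mathbb F_2^{n_G}$, $w_1,\dots,w_{d_R}\in\mathbb F_2^{r_G}$. $H^{M\text{-}M}_X$ has row-block $0$ equal to $H_X$ on $u_0$ and $T$ on $w_1$, and for $1\le j\le d_R-1$ row-block $j$ equal to $H_G$ on $u_j$, $E_{r_G}$ on $w_j$ and $E_{r_G}$ on $w_{j+1}$ (zero elsewhere). $H^{M\text{-}M}_Z$ has row-block $0$ equal to $H_Z$ on $u_0$, and for $1\le i\le d_R$ row-block $i$ equal to $S$ on $u_0$ (only if $i=1$), $E_{n_G}$ on $u_{i-1}$ (only if $i\ge2$), $E_{n_G}$ on $u_i$ (only if $i\le d_R-1$), and $H_G^{\mathrm T}$ on $w_i$. $J^{M\text{-}M}_X$ equals $J_{X,C}$ on $u_0$, $J_{X,C}S^{\mathrm T}$ on each of $u_1,\dots,u_{d_R-1}$, $0$ on $w_1,\dots,w_{d_R-1}$ and $\gamma$ on $w_{d_R}$; $J^{M\text{-}M}_Z$ equals $J_{Z,C}$ on $u_0$ and $0$ elsewhere. Branch-sticker deformed code: blocks $u_0\in\mathbb F_2^n$, $u_1,\dots,u_{d_R-1}\in\mathbb F_2^{n_G}$, $w_1,\dots,w_{d_R-1}\in\mathbb F_2^{r_G}$. $H^{M\text{-}B}_X$ has row-block $0$ equal to $H_X$ on $u_0$ and $T$ on $w_1$, and for $1\le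 j\le d_R-1$ row-block $j$ equal to $H_G$ on $u_j$, $E_{r_G}$ on $w_j$ and $E_{r_G}$ on $w_{j+1}$ (the latter only if $j\le d_R-2$). $H^{M\text{-}B}_Z$ has row-block $0$ equal to $H_Z$ on $u_0$, and for $1\le i\le d_R-1$ row-block $i$ equal to $S$ on $u_0$ (only if $i=1$), $E_{n_G}$ on $u_{i-1}$ (only if $i\ge 2$), $E_{n_G}$ on $u_i$, and $H_G^{\mathrm T}$ on $w_i$. With $J'_X=\binom{J_{X,A}}{J_{X,C}}$, $J'_Z=\binom{J_{Z,A}}{J_{Z,C}}$: $J^{M\text{-}B}_X$ equals $J'_X$ on $u_0$, $J'_XS^{\mathrm T}$ on each $u_j$ ($1\le j\le d_R-1$) and $0$ on all $w_j$; $J^{M\text{-}B}_Z$ equals $J'_Z$ on $u_0$ and $0$ elsewhere. The block $u_{d_R-1}$ is called the open boundary. *)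

theory Defs
  imports "Jordan_Normal_Form.Matrix" "HOL-Library.Z2" "HOL-Library.Extended_Real"
begin

text \<open>Binary linear algebra.  Row vectors over F2 are represented as bit vec of the
  appropriate dimension; a row vector x times a matrix M (the product xM) is
  transpose_mat M applied to x.\<close>

definition wt :: "bit vec \<Rightarrow> nat" where
  "wt v = card {i. i < dim_vec v \<and> v $ i \<noteq> 0}"

definition rs :: "bit mat \<Rightarrow> bit vec set" where
  "rs A = {transpose_mat A *\<^sub>v c | c. c \<in> carrier_vec (dim_row A)}"

definition ker :: "bit mat \<Rightarrow> bit vec set" where
  "ker A = {x \<in> carrier_vec (dim_col A). A *\<^sub>v x = 0\<^sub>v (dim_row A)}"

definition set_mult :: "bit vec set \<Rightarrow> bit mat \<Rightarrow> bit vec set" where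
  "set_mult V M = {transpose_mat M *\<^sub>v v | v. v \<in> V}"

definition set_plus :: "bit vec set \<Rightarrow> bit vec set \<Rightarrow> bit vec set" where
  "set_plus U V = {u + v | u v. u \<in> U \<and> v \<in> V}"

definition dsum3 :: "bit vec set \<Rightarrow> bit vec set \<Rightarrow> bit vec set \<Rightarrow> bit vec set \<Rightarrow> bool" where
  "dsum3 X U V W \<longleftrightarrow> X = {u + v + w | u v w. u \<in> U \<and> v \<in> V \<and> w \<in> W} \<and>
     (\<forall>u\<in>U. \<forall>v\<in>V. \<forall>w\<in>W. u + v + w = 0\<^sub>v (dim_vec u) \<longrightarrow>
        u = 0\<^sub>v (dim_vec u) \<and> v = 0\<^sub>v (dim_vec v) \<and> w = 0\<^sub>v (dim_vec w))"

text \<open>d(H,J) = min{|e| : e in ker H, J e^T \<noteq> 0}; the minimum of the empty set is \<infinity>\<close>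
definition cdist :: "bit mat \<Rightarrow> bit mat \<Rightarrow> enat" where
  "cdist H J = Inf {enat (wt e) | e. e \<in> ker H \<and> J *\<^sub>v e \<noteq> 0\<^sub>v (dim_row J)}"

definition mat_norm :: "bit mat \<Rightarrow> real" where
  "mat_norm S = Max {real (wt (transpose_mat S *\<^sub>v x)) / real (wt x) | x.
       x \<in> carrier_vec (dim_row S) \<and> x \<noteq> 0\<^sub>v (dim_row S)}"

definition restr :: "nat \<Rightarrow> bit vec \<Rightarrow> bit vec" where
  "restr n h = vec n (\<lambda>i. h $ i)"

definition ext0 :: "nat \<Rightarrow> bit vec \<Rightarrow> bit vec" where
  "ext0 N h = vec N (\<lambda>i. if i < dim_vec h then h $ i else 0)"

text \<open>Block-matrix assembly: an R x C matrix, zero except for the listed blocks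
  (row offset, column offset, block), entries of overlapping blocks being added.\<close>
definition place :: "nat \<Rightarrow> nat \<Rightarrow> (nat \<times> nat \<times> bit mat) list \<Rightarrow> bit mat" where
  "place R C bs = mat R C (\<lambda>(i, j). sum_list (map (\<lambda>(r0, c0, M).
      if r0 \<le> i \<and> i < r0 + dim_row M \<and> c0 \<le> j \<and> j < c0 + dim_col M
      then M $$ (i - r0, j - c0) else 0) bs))"

text \<open>Column layout: u_0 (n coordinates), then u_1 .. u_{dR-1} (nG each), then
  w_1, w_2, ... (rG each).\<close>
definition uoff :: "nat \<Rightarrow> nat \<Rightarrow> nat \<Rightarrow> nat" where
  "uoff n nG j = n + (j - 1) * nG"

definition woff :: "nat \<Rightarrow> nat \<Rightarrow> nat \<Rightarrow> nat \<Rightarrow> nat \<Rightarrow> nat" where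
  "woff n nG dR rG j = n + (dR - 1) * nG + (j - 1) * rG"

definition NMM :: "nat \<Rightarrow> nat \<Rightarrow> nat \<Rightarrow> nat \<Rightarrow> nat" where
  "NMM n nG rG dR = n + (dR - 1) * nG + dR * rG"

definition HX_MM :: "nat \<Rightarrow> bit mat \<Rightarrow> bit mat \<Rightarrow> bit mat \<Rightarrow> bit mat" where
  "HX_MM dR HX HG T =
    (let n = dim_col HX; rX = dim_row HX; rG = dim_row HG; nG = dim_col HG in
     place (rX + (dR - 1) * rG) (NMM n nG rG dR)
      ([(0, 0, HX), (0, woff n nG dR rG 1, T)] @
       concat (map (\<lambda>j. let r0 = rX + (j - 1) * rG in
          [(r0, uoff n nG j, HG), (r0, woff n nG dR rG j, 1\<^sub>m rG),
           (r0, woff n nG dR rG (j + 1), 1\<^sub>m rG)]) [1..<dR])))"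

definition HZ_MM :: "nat \<Rightarrow> bit mat \<Rightarrow> bit mat \<Rightarrow> bit mat \<Rightarrow> bit mat" where
  "HZ_MM dR HZ HG S =
    (let n = dim_col HZ; rZ = dim_row HZ; rG = dim_row HG; nG = dim_col HG in
     place (rZ + dR * nG) (NMM n nG rG dR)
      ([(0, 0, HZ)] @
       concat (map (\<lambda>i. let r0 = rZ + (i - 1) * nG in
          (if i = 1 then [(r0, 0, S)] else []) @
          (if 2 \<le> i then [(r0, uoff n nG (i - 1), 1\<^sub>m nG)] else []) @
          (if i \<le> dR - 1 then [(r0, uoff n nG i, 1\<^sub>m nG)] else []) @
          [(r0, woff n nG dR rG i, transpose_mat HG)]) [1..<dR + 1])))"

definition JX_MM :: "nat \<Rightarrow> bit mat \<Rightarrow> bit mat \<Rightarrow> bit mat \<Rightarrow> bit mat \<Rightarrow> bit mat" where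
  "JX_MM dR JXC HG S \<gamma> =
    (let n = dim_col JXC; rG = dim_row HG; nG = dim_col HG in
     place (dim_row JXC) (NMM n nG rG dR)
      ([(0, 0, JXC)] @
       map (\<lambda>j. (0, uoff n nG j, JXC * transpose_mat S)) [1..<dR] @
       [(0, woff n nG dR rG dR, \<gamma>)]))"

definition JZ_MM :: "nat \<Rightarrow> bit mat \<Rightarrow> bit mat \<Rightarrow> bit mat" where
  "JZ_MM dR JZC HG =
    (let n = dim_col JZC; rG = dim_row HG; nG = dim_col HG in
     place (dim_row JZC) (NMM n nG rG dR) [(0, 0, JZC)])"

definition NMB :: "nat \<Rightarrow> nat \<Rightarrow> nat \<Rightarrow> nat \<Rightarrow> nat" where
  "NMB n nG rG dR = n + (dR - 1) * nG + (dR - 1) * rG"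

definition HX_MB :: "nat \<Rightarrow> bit mat \<Rightarrow> bit mat \<Rightarrow> bit mat \<Rightarrow> bit mat" where
  "HX_MB dR HX HG T =
    (let n = dim_col HX; rX = dim_row HX; rG = dim_row HG; nG = dim_col HG in
     place (rX + (dR - 1) * rG) (NMB n nG rG dR)
      ([(0, 0, HX), (0, woff n nG dR rG 1, T)] @
       concat (map (\<lambda>j. let r0 = rX + (j - 1) * rG in
          [(r0, uoff n nG j, HG), (r0, woff n nG dR rG j, 1\<^sub>m rG)] @
          (if j \<le> dR - 2 then [(r0, woff n nG dR rG (j + 1), 1\<^sub>m rG)] else []))
          [1..<dR])))"

definition HZ_MB :: "nat \<Rightarrow> bit mat \<Rightarrow> bit mat \<Rightarrow> bit mat \<Rightarrow> bit mat" where
  "HZ_MB dR HZ HG S =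
    (let n = dim_col HZ; rZ = dim_row HZ; rG = dim_row HG; nG = dim_col HG in
     place (rZ + (dR - 1) * nG) (NMB n nG rG dR)
      ([(0, 0, HZ)] @
       concat (map (\<lambda>i. let r0 = rZ + (i - 1) * nG in
          (if i = 1 then [(r0, 0, S)] else []) @
          (if 2 \<le> i then [(r0, uoff n nG (i - 1), 1\<^sub>m nG)] else []) @
          [(r0, uoff n nG i, 1\<^sub>m nG), (r0, woff n nG dR rG i, transpose_mat HG)])
          [1..<dR])))"

definition JX_MB :: "nat \<Rightarrow> bit mat \<Rightarrow> bit mat \<Rightarrow> bit mat \<Rightarrow> bit mat" where
  "JX_MB dR JX' HG S =
    (let n = dim_col JX'; rG = dim_row HG; nG = dim_col HG in
     place (dim_row JX') (NMB n nG rG dR)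
      ([(0, 0, JX')] @ map (\<lambda>j. (0, uoff n nG j, JX' * transpose_mat S)) [1..<dR]))"

definition JZ_MB :: "nat \<Rightarrow> bit mat \<Rightarrow> bit mat \<Rightarrow> bit mat" where
  "JZ_MB dR JZ' HG =
    (let n = dim_col JZ'; rG = dim_row HG; nG = dim_col HG in
     place (dim_row JZ') (NMB n nG rG dR) [(0, 0, JZ')])"

end

theory Submission
  imports Defs
begin


definition sv :: "nat \<Rightarrow> nat \<Rightarrow> bit vec \<Rightarrow> bit vec" where
  "sv c0 m x = vec m (\<lambda>i. x $ (c0 + i))"

lemma sv_carrier[simp]: "sv c0 m x \<in> carrier_vec m" and sv_dim[simp]: "dim_vec (sv c0 m x) = m"
  and sv_index[simp]: "i < m \<Longrightarrow> sv c0 m x $ i = x $ (c0 + i)"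
  by (auto simp: sv_def)

lemma mv_index: "A \<in> carrier_mat r c \<Longrightarrow> x \<in> carrier_vec c \<Longrightarrow> i < r \<Longrightarrow>
   (A *\<^sub>v x) $ i = (\<Sum>j<c. A $$ (i,j) * x $ j)"
  by (auto simp: scalar_prod_def row_def lessThan_atLeast0 intro!: sum.cong)

lemma place_index: "i < R \<Longrightarrow> j < C \<Longrightarrow> place R C bs $$ (i,j) =
  sum_list (map (\<lambda>(r0, c0, M). if r0 \<le> i \<and> i < r0 + dim_row M \<and> c0 \<le> j \<and> j < c0 + dim_col M
      then M $$ (i - r0, j - c0) else 0) bs)"
  by (simp add: place_def)

lemma place_carrier[simp]: "place R C bs \<in> carrier_mat R C"
  by (simp add: place_def)

lemma block_sum:
  fixes M :: "bit mat"
  assumes x: "x \<in> carrier_vec C" and fit: "c0 + dim_col M \<le> C"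
  shows "(\<Sum>j<C. (if r0 \<le> i \<and> i < r0 + dim_row M \<and> c0 \<le> j \<and> j < c0 + dim_col M
      then M $$ (i - r0, j - c0) else 0) * x $ j) =
    (if r0 \<le> i \<and> i < r0 + dim_row M then (M *\<^sub>v sv c0 (dim_col M) x) $ (i - r0) else 0)"
proof (cases "r0 \<le> i \<and> i < r0 + dim_row M")
  case True
  have "(\<Sum>j<C. (if r0 \<le> i \<and> i < r0 + dim_row M \<and> c0 \<le> j \<and> j < c0 + dim_col M
      then M $$ (i - r0, j - c0) else 0) * x $ j) =
      (\<Sum>j<C. if j \<in> {c0..<c0 + dim_col M} then M $$ (i - r0, j - c0) * x $ j else 0)"
    using True by (intro sum.cong) auto
  also have "\<dots> = (\<Sum>j\<in>{c0..<c0 + dim_col M}. M $$ (i - r0, j - c0) * x $ j)"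
  proof -
    have e: "{..<C} \<inter> {c0..<c0 + dim_col M} = {c0..<c0 + dim_col M}" using fit by auto
    show ?thesis using sum.inter_restrict[of "{..<C}" "\<lambda>j. M $$ (i - r0, j - c0) * x $ j" "{c0..<c0 + dim_col M}"]
      unfolding e by simp
  qed
  also have "\<dots> = (\<Sum>j\<in>{0..<dim_col M}. M $$ (i - r0, j) * x $ (c0 + j))"
    using sum.shift_bounds_nat_ivl[of "\<lambda>j. M $$ (i - r0, j - c0) * x $ j" 0 c0 "dim_col M"]
    by (simp add: add.commute)
  also have "\<dots> = (M *\<^sub>v sv c0 (dim_col M) x) $ (i - r0)"
    using True by (subst mv_index[of _ "dim_row M" "dim_col M"]) (auto simp: lessThan_atLeast0)
  finally show ?thesis using True by simp
qed auto

lemma place_mult: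
  assumes x: "x \<in> carrier_vec C" and i: "i < R"
    and fit: "\<And>r0 c0 M. (r0, c0, M) \<in> set bs \<Longrightarrow> c0 + dim_col M \<le> C"
  shows "(place R C bs *\<^sub>v x) $ i = sum_list (map (\<lambda>(r0, c0, M).
     if r0 \<le> i \<and> i < r0 + dim_row M then (M *\<^sub>v sv c0 (dim_col M) x) $ (i - r0) else 0) bs)"
proof -
  have "(place R C bs *\<^sub>v x) $ i = (\<Sum>j<C. place R C bs $$ (i,j) * x $ j)"
    using x i by (intro mv_index) auto
  also have "\<dots> = (\<Sum>j<C. sum_list (map (\<lambda>(r0, c0, M). if r0 \<le> i \<and> i < r0 + dim_row M \<and> c0 \<le> j \<and> j < c0 + dim_col M
      then M $$ (i - r0, j - c0) else 0) bs) * x $ j)"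
    using i by (intro sum.cong) (auto simp: place_index)
  also have "\<dots> = sum_list (map (\<lambda>(r0, c0, M).
     if r0 \<le> i \<and> i < r0 + dim_row M then (M *\<^sub>v sv c0 (dim_col M) x) $ (i - r0) else 0) bs)"
    using fit
  proof (induction bs)
    case Nil then show ?case by simp
  next
    case (Cons b bs)
    obtain r0 c0 M where b: "b = (r0, c0, M)" by (cases b) auto
    have IH: "(\<Sum>j<C. sum_list (map (\<lambda>(r0, c0, M). if r0 \<le> i \<and> i < r0 + dim_row M \<and> c0 \<le> j \<and> j < c0 + dim_col M
      then M $$ (i - r0, j - c0) else 0) bs) * x $ j) = sum_list (map (\<lambda>(r0, c0, M).
     if r0 \<le> i \<and> i < r0 + dim_row M then (M *\<^sub>v sv c0 (dim_col M) x) $ (i - r0) else 0) bs)"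
      using Cons by auto
    have f: "c0 + dim_col M \<le> C" using Cons.prems b by auto
    show ?case
      unfolding b list.map sum_list.Cons prod.case distrib_right sum.distrib IH
      using block_sum[OF x f, of r0 i] by simp
  qed
  finally show ?thesis .
qed

lemma transpose_place: "transpose_mat (place R C bs) =
   place C R (map (\<lambda>(r0, c0, M). (c0, r0, transpose_mat M)) bs)"
proof (rule eq_matI)
  fix i j assume "i < dim_row (place C R (map (\<lambda>(r0, c0, M). (c0, r0, transpose_mat M)) bs))"
     "j < dim_col (place C R (map (\<lambda>(r0, c0, M). (c0, r0, transpose_mat M)) bs))"
  then have ij: "i < C" "j < R" by (auto simp: place_def)
  show "transpose_mat (place R C bs) $$ (i, j) = place C R (map (\<lambda>(r0, c0, M). (c0, r0, transpose_mat M)) bs) $$ (i, j)"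
  proof -
    have "transpose_mat (place R C bs) $$ (i, j) = place R C bs $$ (j, i)" using ij by (simp add: place_def)
    also have "\<dots> = sum_list (map (\<lambda>(r0, c0, M). if r0 \<le> j \<and> j < r0 + dim_row M \<and> c0 \<le> i \<and> i < c0 + dim_col M
      then M $$ (j - r0, i - c0) else 0) bs)" by (rule place_index[OF ij(2) ij(1)])
    also have "\<dots> = place C R (map (\<lambda>(r0, c0, M). (c0, r0, transpose_mat M)) bs) $$ (i, j)"
      by (subst place_index[OF ij]) (auto simp: comp_def intro!: arg_cong[where f=sum_list] map_cong split: prod.splits)
    finally show ?thesis .
  qed
qed (auto simp: place_def)

lemma place_tmult:
  assumes c: "c \<in> carrier_vec R" and j: "j < C"
    and fit: "\<And>r0 c0 M. (r0, c0, M) \<in> set bs \<Longrightarrow> r0 + dim_row M \<le> R"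
  shows "(transpose_mat (place R C bs) *\<^sub>v c) $ j = sum_list (map (\<lambda>(r0, c0, M).
     if c0 \<le> j \<and> j < c0 + dim_col M then (transpose_mat M *\<^sub>v sv r0 (dim_row M) c) $ (j - c0) else 0) bs)"
  unfolding transpose_place
  by (subst place_mult[OF c j]) (use fit in \<open>auto simp: comp_def intro!: arg_cong[where f = sum_list] map_cong split: prod.splits\<close>)


lemma bit_add_self[simp]: "(x::bit) + x = 0" by simp

lemma vec_add_self: "v \<in> carrier_vec n \<Longrightarrow> (v :: bit vec) + v = 0\<^sub>v n"
  by (intro eq_vecI) auto

lemma sum_lessThan_add: fixes f :: "nat \<Rightarrow> 'a::comm_monoid_add"
  shows "(\<Sum>r<q+p. f r) = (\<Sum>r<q. f r) + (\<Sum>r<p. f (q+r))"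
  by (induction p) (simp_all add: add.assoc)

lemma append_rows_index: assumes A: "A \<in> carrier_mat q n" and B: "B \<in> carrier_mat p n"
  and r: "r < q + p" and j: "j < n"
  shows "(A @\<^sub>r B) $$ (r, j) = (if r < q then A $$ (r, j) else B $$ (r - q, j))"
  using A B r j by (simp add: append_rows_def)

lemma tmult_append_rows:
  fixes A B :: "bit mat"
  assumes A: "A \<in> carrier_mat q n" and B: "B \<in> carrier_mat p n" and c: "c \<in> carrier_vec (q + p)"
  shows "transpose_mat (A @\<^sub>r B) *\<^sub>v c = transpose_mat A *\<^sub>v sv 0 q c + transpose_mat B *\<^sub>v sv q p c"
proof (rule eq_vecI)
  have AB: "A @\<^sub>r B \<in> carrier_mat (q + p) n" using A B by auto
  show "dim_vec (transpose_mat (A @\<^sub>r B) *\<^sub>v c) = dim_vec (transpose_mat A *\<^sub>v sv 0 q c + transpose_mat B *\<^sub>v sv q p c)"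
  proof -
    have "dim_col (A @\<^sub>r B) = n" using AB by (rule carrier_matD)
    then show ?thesis using A B by simp
  qed
  fix j assume "j < dim_vec (transpose_mat A *\<^sub>v sv 0 q c + transpose_mat B *\<^sub>v sv q p c)"
  then have j: "j < n" using A B by simp
  have "(transpose_mat (A @\<^sub>r B) *\<^sub>v c) $ j = (\<Sum>r<q+p. transpose_mat (A @\<^sub>r B) $$ (j, r) * c $ r)"
    using AB c j by (intro mv_index) auto
  also have "\<dots> = (\<Sum>r<q. transpose_mat (A @\<^sub>r B) $$ (j, r) * c $ r) + (\<Sum>r<p. transpose_mat (A @\<^sub>r B) $$ (j, q + r) * c $ (q + r))"
    by (rule sum_lessThan_add)
  also have "(\<Sum>r<q. transpose_mat (A @\<^sub>r B) $$ (j, r) * c $ r) = (\<Sum>r<q. transpose_mat A $$ (j, r) * sv 0 q c $ r)"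
    using AB A B j by (intro sum.cong refl) (simp add: append_rows_index carrier_matD[OF AB])
  also have "\<dots> = (transpose_mat A *\<^sub>v sv 0 q c) $ j"
    using A j by (intro mv_index[symmetric]) auto
  also have "(\<Sum>r<p. transpose_mat (A @\<^sub>r B) $$ (j, q + r) * c $ (q + r)) = (\<Sum>r<p. transpose_mat B $$ (j, r) * sv q p c $ r)"
    using AB A B j by (intro sum.cong refl) (simp add: append_rows_index carrier_matD[OF AB])
  also have "\<dots> = (transpose_mat B *\<^sub>v sv q p c) $ j"
    using B j by (intro mv_index[symmetric]) auto
  finally show "(transpose_mat (A @\<^sub>r B) *\<^sub>v c) $ j = (transpose_mat A *\<^sub>v sv 0 q c + transpose_mat B *\<^sub>v sv q p c) $ j"
    using A B j by simp
qed

lemma append_rows_mult_index1: assumes A: "A \<in> carrier_mat q n" and B: "B \<in> carrier_mat p n"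
  and x: "x \<in> carrier_vec n" and i: "i < q"
  shows "((A @\<^sub>r B) *\<^sub>v x) $ i = (A *\<^sub>v x) $ i"
  using A B x i by (simp add: mat_mult_append)

lemma append_rows_mult_index2: assumes A: "A \<in> carrier_mat q n" and B: "B \<in> carrier_mat p n"
  and x: "x \<in> carrier_vec n" and i: "i < p"
  shows "((A @\<^sub>r B) *\<^sub>v x) $ (q + i) = (B *\<^sub>v x) $ i"
  using A B x i by (simp add: mat_mult_append)

lemma mv_sumvec:
  fixes M :: "'a::comm_ring mat"
  assumes M: "M \<in> carrier_mat a b" and E: "\<And>j. j \<in> J \<Longrightarrow> E j \<in> carrier_vec b" and r: "r < a"
  shows "(M *\<^sub>v vec b (\<lambda>t. \<Sum>j\<in>J. E j $ t)) $ r = (\<Sum>j\<in>J. (M *\<^sub>v E j) $ r)"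
proof -
  have "(M *\<^sub>v vec b (\<lambda>t. \<Sum>j\<in>J. E j $ t)) $ r = (\<Sum>t\<in>{0..<b}. M $$ (r, t) * (\<Sum>j\<in>J. E j $ t))"
    using M r by (simp add: scalar_prod_def row_def)
  also have "\<dots> = (\<Sum>j\<in>J. \<Sum>t\<in>{0..<b}. M $$ (r, t) * E j $ t)"
    by (simp add: sum_distrib_left sum.swap[of _ J])
  also have "\<dots> = (\<Sum>j\<in>J. (M *\<^sub>v E j) $ r)"
  proof (intro sum.cong refl)
    fix j assume "j \<in> J"
    then have d: "dim_vec (E j) = b" using E by auto
    show "(\<Sum>t\<in>{0..<b}. M $$ (r, t) * E j $ t) = (M *\<^sub>v E j) $ r"
      using M r d by (simp add: scalar_prod_def row_def)
  qed
  finally show ?thesis .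
qed

lemma telescope_bit: fixes f :: "nat \<Rightarrow> bit"
  assumes "a \<le> b" shows "(\<Sum>j\<in>{a..<b}. f j + f (Suc j)) = f a + f b"
  using assms
proof (induction b)
  case 0 then show ?case by simp
next
  case (Suc b)
  show ?case
  proof (cases "a = Suc b")
    case True then show ?thesis by simp
  next
    case False
    then have ab: "a \<le> b" using Suc by simp
    have "(\<Sum>j\<in>{a..<Suc b}. f j + f (Suc j)) = (\<Sum>j\<in>{a..<b}. f j + f (Suc j)) + (f b + f (Suc b))"
      using ab by simp
    also have "\<dots> = f a + f b + (f b + f (Suc b))" using Suc.IH ab by simp
    also have "\<dots> = f a + f (Suc b)" by (metis add.assoc add_0_left bit_add_self)
    finally show ?thesis .
  qed
qed

definition supp :: "bit vec \<Rightarrow> nat set" where "supp v = {i. i < dim_vec v \<and> v $ i \<noteq> 0}"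

lemma wt_supp: "wt v = card (supp v)" by (simp add: wt_def supp_def)
lemma finite_supp[simp]: "finite (supp v)" by (simp add: supp_def)

lemma wt_add_le: assumes "dim_vec u = dim_vec v" shows "wt (u + v) \<le> wt u + wt v"
proof -
  have "supp (u + v) \<subseteq> supp u \<union> supp v" using assms by (auto simp: supp_def)
  then have "card (supp (u + v)) \<le> card (supp u \<union> supp v)" by (intro card_mono) auto
  also have "\<dots> \<le> card (supp u) + card (supp v)" by (rule card_Un_le)
  finally show ?thesis by (simp add: wt_supp)
qed

lemma wt_zero[simp]: "wt (0\<^sub>v n) = 0" by (simp add: wt_def)

lemma wt_pos: assumes "v \<in> carrier_vec n" "v \<noteq> 0\<^sub>v n" shows "1 \<le> wt v"
proof -
  have "\<exists>i<n. v $ i \<noteq> 0"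
  proof (rule ccontr)
    assume "\<not> ?thesis"
    then have "v = 0\<^sub>v n" using assms(1) by (intro eq_vecI) auto
    with assms(2) show False by simp
  qed
  then obtain i where "i < n" "v $ i \<noteq> 0" by blast
  then have "i \<in> supp v" using assms by (auto simp: supp_def)
  then have "supp v \<noteq> {}" by auto
  then show ?thesis by (simp add: wt_supp Suc_le_eq card_gt_0_iff)
qed

lemma wt_sumvec: assumes J: "finite J" and E: "\<And>j. j \<in> J \<Longrightarrow> E j \<in> carrier_vec m"
  shows "wt (vec m (\<lambda>t. \<Sum>j\<in>J. E j $ t)) \<le> (\<Sum>j\<in>J. wt (E j))"
proof -
  have "supp (vec m (\<lambda>t. \<Sum>j\<in>J. E j $ t)) \<subseteq> (\<Union>j\<in>J. supp (E j))"
  proof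
    fix t assume "t \<in> supp (vec m (\<lambda>t. \<Sum>j\<in>J. E j $ t))"
    then have t: "t < m" and nz: "(\<Sum>j\<in>J. E j $ t) \<noteq> 0" by (auto simp: supp_def)
    then obtain j where j: "j \<in> J" "E j $ t \<noteq> 0" by (meson sum.neutral)
    have "dim_vec (E j) = m" using E[OF j(1)] by auto
    then have "t \<in> supp (E j)" using j t by (simp add: supp_def)
    then show "t \<in> (\<Union>j\<in>J. supp (E j))" using j by blast
  qed
  then have "card (supp (vec m (\<lambda>t. \<Sum>j\<in>J. E j $ t))) \<le> card (\<Union>j\<in>J. supp (E j))"
    using J by (intro card_mono) auto
  also have "\<dots> \<le> (\<Sum>j\<in>J. card (supp (E j)))" by (rule card_UN_le[OF J])
  finally show ?thesis by (simp add: wt_supp)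
qed

lemma wt_sv: assumes "c + m \<le> dim_vec e" shows "wt (sv c m e) = card (supp e \<inter> {c..<c+m})"
proof -
  have "supp e \<inter> {c..<c+m} = (\<lambda>i. c + i) ` supp (sv c m e)"
  proof
    show "supp e \<inter> {c..<c + m} \<subseteq> (\<lambda>i. c + i) ` supp (sv c m e)"
    proof
      fix x assume x: "x \<in> supp e \<inter> {c..<c + m}"
      then have "x - c \<in> supp (sv c m e)" by (auto simp: supp_def)
      moreover have "x = c + (x - c)" using x by auto
      ultimately show "x \<in> (\<lambda>i. c + i) ` supp (sv c m e)" by blast
    qed
    show "(\<lambda>i. c + i) ` supp (sv c m e) \<subseteq> supp e \<inter> {c..<c + m}"
      using assms by (auto simp: supp_def)
  qed
  moreover have "inj_on (\<lambda>i. c + i) (supp (sv c m e))" by (rule inj_onI) simp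
  ultimately show ?thesis unfolding wt_supp by (simp add: card_image)
qed

lemma wt_blocks:
  assumes J: "finite J" and fit: "\<And>j. j \<in> J \<Longrightarrow> c j + m j \<le> dim_vec e"
    and disj: "\<And>j j'. j \<in> J \<Longrightarrow> j' \<in> J \<Longrightarrow> j \<noteq> j' \<Longrightarrow> {c j..<c j + m j} \<inter> {c j'..<c j' + m j'} = {}"
  shows "(\<Sum>j\<in>J. wt (sv (c j) (m j) e)) \<le> wt e"
proof -
  have "(\<Sum>j\<in>J. wt (sv (c j) (m j) e)) = (\<Sum>j\<in>J. card (supp e \<inter> {c j..<c j + m j}))"
    using fit by (intro sum.cong refl wt_sv) auto
  also have "\<dots> = card (\<Union>j\<in>J. supp e \<inter> {c j..<c j + m j})"
  proof (rule card_UN_disjoint[symmetric])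
    show "finite J" by (rule J)
    show "\<forall>i\<in>J. finite (supp e \<inter> {c i..<c i + m i})" by simp
    show "\<forall>i\<in>J. \<forall>j\<in>J. i \<noteq> j \<longrightarrow> supp e \<inter> {c i..<c i + m i} \<inter> (supp e \<inter> {c j..<c j + m j}) = {}"
      using disj by blast
  qed
  also have "\<dots> \<le> card (supp e)" by (intro card_mono) auto
  finally show ?thesis by (simp add: wt_supp)
qed

lemma UNIV_bit: "(UNIV :: bit set) = {0, 1}"
proof -
  have "x = 0 \<or> x = 1" for x :: bit by (cases x) simp_all
  then show ?thesis by blast
qed

lemma finite_bit: "finite (UNIV :: bit set)" unfolding UNIV_bit by simp

lemma finite_carrier_vec_bit: "finite (carrier_vec n :: bit vec set)"
proof -
  have "carrier_vec n \<subseteq> (\<lambda>f. vec n f) ` ({0..<n} \<rightarrow>\<^sub>E (UNIV :: bit set))"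
  proof
    fix v :: "bit vec" assume v: "v \<in> carrier_vec n"
    have "v = vec n (restrict (\<lambda>i. v $ i) {0..<n})" using v by (intro eq_vecI) simp_all
    moreover have "restrict (\<lambda>i. v $ i) {0..<n} \<in> {0..<n} \<rightarrow>\<^sub>E (UNIV :: bit set)" by (simp add: restrict_PiE_iff)
    ultimately show "v \<in> (\<lambda>f. vec n f) ` ({0..<n} \<rightarrow>\<^sub>E UNIV)" by (rule image_eqI)
  qed
  moreover have "finite ({0..<n} \<rightarrow>\<^sub>E (UNIV :: bit set))" by (rule finite_PiE) (rule finite_atLeastLessThan, rule finite_bit)
  ultimately show ?thesis by (rule finite_subset[OF _ finite_imageI])
qed

lemma mat_norm_bound:
  assumes S: "S \<in> carrier_mat nG n" and x: "x \<in> carrier_vec nG"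
  shows "real (wt (transpose_mat S *\<^sub>v x)) \<le> mat_norm S * real (wt x)"
proof (cases "x = 0\<^sub>v nG")
  case True
  have "transpose_mat S *\<^sub>v x = 0\<^sub>v n"
  proof (rule eq_vecI)
    fix j assume "j < dim_vec (0\<^sub>v n :: bit vec)"
    then have j: "j < n" by simp
    have "(transpose_mat S *\<^sub>v x) $ j = (\<Sum>t<nG. transpose_mat S $$ (j, t) * x $ t)"
      using S x j by (intro mv_index) auto
    also have "\<dots> = 0" using True by (intro sum.neutral) simp
    finally show "(transpose_mat S *\<^sub>v x) $ j = 0\<^sub>v n $ j" using j by simp
  qed (use S in simp)
  then show ?thesis using True by simp
next
  case False
  let ?A = "{real (wt (transpose_mat S *\<^sub>v x)) / real (wt x) | x. x \<in> carrier_vec (dim_row S) \<and> x \<noteq> 0\<^sub>v (dim_row S)}"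
  have "?A = (\<lambda>x. real (wt (transpose_mat S *\<^sub>v x)) / real (wt x)) ` {x \<in> carrier_vec nG. x \<noteq> 0\<^sub>v nG}"
    unfolding carrier_matD(1)[OF S] by blast
  then have fin: "finite ?A" using finite_carrier_vec_bit by simp
  have "real (wt (transpose_mat S *\<^sub>v x)) / real (wt x) \<in> ?A"
    unfolding carrier_matD(1)[OF S] using x False by blast
  then have le: "real (wt (transpose_mat S *\<^sub>v x)) / real (wt x) \<le> mat_norm S"
    unfolding mat_norm_def by (rule Max_ge[OF fin])
  have "1 \<le> wt x" using wt_pos[OF x False] .
  then have p: "0 < real (wt x)" by simp
  show ?thesis using le unfolding pos_divide_le_eq[OF p] .
qed

lemma mat_norm_ge1:
  assumes S: "S \<in> carrier_mat nG n" and nz: "S \<noteq> 0\<^sub>m nG n"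
  shows "1 \<le> mat_norm S"
proof -
  have "\<exists>i j. i < nG \<and> j < n \<and> S $$ (i, j) \<noteq> 0"
  proof (rule ccontr)
    assume a: "\<not> ?thesis"
    have "S = 0\<^sub>m nG n"
    proof (rule eq_matI)
      fix i j assume "i < dim_row (0\<^sub>m nG n :: bit mat)" "j < dim_col (0\<^sub>m nG n :: bit mat)"
      then show "S $$ (i, j) = 0\<^sub>m nG n $$ (i, j)" using a by simp
    qed (use S in simp_all)
    with nz show False by simp
  qed
  then obtain i j where ij: "i < nG" "j < n" "S $$ (i, j) \<noteq> 0" by blast
  let ?x = "unit_vec nG i :: bit vec"
  have x1: "?x \<in> carrier_vec nG" by simp
  have xi: "?x $ i = 1" using ij by simp
  have x2: "?x \<noteq> 0\<^sub>v nG"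
  proof
    assume "?x = 0\<^sub>v nG"
    then have "?x $ i = 0" using ij by simp
    with xi show False by simp
  qed
  have "supp ?x = {i}"
  proof
    show "supp ?x \<subseteq> {i}"
    proof
      fix t assume "t \<in> supp ?x"
      then have "t < nG" "?x $ t \<noteq> 0" by (simp_all add: supp_def)
      then show "t \<in> {i}" by (cases "t = i") (simp_all add: unit_vec_def)
    qed
    show "{i} \<subseteq> supp ?x" using ij xi by (simp add: supp_def)
  qed
  then have wx: "wt ?x = 1" by (simp add: wt_supp)
  have "(transpose_mat S *\<^sub>v ?x) $ j = (\<Sum>t<nG. transpose_mat S $$ (j, t) * ?x $ t)"
    using S ij by (intro mv_index) auto
  also have "\<dots> = (\<Sum>t<nG. if t = i then S $$ (i, j) else 0)"
  proof (intro sum.cong refl)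
    fix t assume "t \<in> {..<nG}"
    then show "transpose_mat S $$ (j, t) * ?x $ t = (if t = i then S $$ (i, j) else 0)"
      using S ij by (cases "t = i") simp_all
  qed
  also have "\<dots> = S $$ (i, j)" using ij by simp
  finally have "(transpose_mat S *\<^sub>v ?x) $ j \<noteq> 0" using ij by simp
  then have "transpose_mat S *\<^sub>v ?x \<noteq> 0\<^sub>v n" using ij by (metis index_zero_vec(1))
  then have "1 \<le> wt (transpose_mat S *\<^sub>v ?x)" using S by (intro wt_pos) auto
  moreover have "real (wt (transpose_mat S *\<^sub>v ?x)) \<le> mat_norm S * real (wt ?x)"
    by (rule mat_norm_bound[OF S x1])
  ultimately have a: "1 \<le> real (wt (transpose_mat S *\<^sub>v ?x))" and
     b: "real (wt (transpose_mat S *\<^sub>v ?x)) \<le> mat_norm S * real (wt ?x)" by simp_all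
  from b have "real (wt (transpose_mat S *\<^sub>v ?x)) \<le> mat_norm S" unfolding wx by simp
  with a show ?thesis by linarith
qed

lemma cdist_upper: assumes "e \<in> ker H" "J *\<^sub>v e \<noteq> 0\<^sub>v (dim_row J)"
  shows "cdist H J \<le> enat (wt e)"
proof -
  have "enat (wt e) \<in> {enat (wt e) | e. e \<in> ker H \<and> J *\<^sub>v e \<noteq> 0\<^sub>v (dim_row J)}"
    using assms by blast
  then show ?thesis unfolding cdist_def by (rule Inf_lower)
qed

lemma cdist_lower:
  assumes "\<And>e. e \<in> ker H \<Longrightarrow> J *\<^sub>v e \<noteq> 0\<^sub>v (dim_row J) \<Longrightarrow> x \<le> ereal (real (wt e))"
  shows "x \<le> ereal_of_enat (cdist H J)"
proof -
  define A where "A = {enat (wt e) | e. e \<in> ker H \<and> J *\<^sub>v e \<noteq> 0\<^sub>v (dim_row J)}"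
  have cd: "cdist H J = Inf A" unfolding cdist_def A_def ..
  have memA: "\<And>y. y \<in> A \<Longrightarrow> \<exists>e. y = enat (wt e) \<and> e \<in> ker H \<and> J *\<^sub>v e \<noteq> 0\<^sub>v (dim_row J)"
    unfolding A_def by blast
  show ?thesis
  proof (cases "A = {}")
    case True
    then have "Inf A = \<infinity>" unfolding Inf_enat_def by (simp only: if_P)
    then show ?thesis unfolding cd by simp
  next
    case False
    then obtain y where "y \<in> A" by blast
    then have "(LEAST x. x \<in> A) \<in> A" by (rule LeastI)
    then have "Inf A \<in> A" unfolding Inf_enat_def by (simp only: if_not_P[OF False])
    then obtain e where e: "Inf A = enat (wt e)" "e \<in> ker H" "J *\<^sub>v e \<noteq> 0\<^sub>v (dim_row J)"
      using memA by blast
    show ?thesis unfolding cd e(1) using assms[OF e(2,3)] by simp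
  qed
qed


definition rowc :: "nat \<Rightarrow> bit vec \<Rightarrow> nat \<times> nat \<times> bit mat \<Rightarrow> bit" where
  "rowc i x b = (case b of (r0, c0, M) \<Rightarrow>
     if r0 \<le> i \<and> i < r0 + dim_row M then (M *\<^sub>v sv c0 (dim_col M) x) $ (i - r0) else 0)"

definition colc :: "nat \<Rightarrow> bit vec \<Rightarrow> nat \<times> nat \<times> bit mat \<Rightarrow> bit" where
  "colc j c b = (case b of (r0, c0, M) \<Rightarrow>
     if c0 \<le> j \<and> j < c0 + dim_col M then (transpose_mat M *\<^sub>v sv r0 (dim_row M) c) $ (j - c0) else 0)"

lemma rowc_out: "\<not> (r0 \<le> i \<and> i < r0 + dim_row M) \<Longrightarrow> rowc i x (r0, c0, M) = 0"
  unfolding rowc_def prod.case by (rule if_not_P)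
lemma rowc_in: "r0 \<le> i \<Longrightarrow> i < r0 + dim_row M \<Longrightarrow> rowc i x (r0, c0, M) = (M *\<^sub>v sv c0 (dim_col M) x) $ (i - r0)"
  unfolding rowc_def prod.case by (rule if_P) simp
lemma colc_out: "\<not> (c0 \<le> j \<and> j < c0 + dim_col M) \<Longrightarrow> colc j c (r0, c0, M) = 0"
  unfolding colc_def prod.case by (rule if_not_P)
lemma colc_in: "c0 \<le> j \<Longrightarrow> j < c0 + dim_col M \<Longrightarrow> colc j c (r0, c0, M) = (transpose_mat M *\<^sub>v sv r0 (dim_row M) c) $ (j - c0)"
  unfolding colc_def prod.case by (rule if_P) simp

lemma sum_list_map_cong: "(\<And>b. b \<in> set L \<Longrightarrow> f b = g b) \<Longrightarrow> sum_list (map f L) = sum_list (map g L)"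
  by (metis map_cong)

lemma place_mult':
  assumes "x \<in> carrier_vec C" "i < R" "\<And>r0 c0 M. (r0, c0, M) \<in> set bs \<Longrightarrow> c0 + dim_col M \<le> C"
  shows "(place R C bs *\<^sub>v x) $ i = sum_list (map (rowc i x) bs)"
proof -
  have "(place R C bs *\<^sub>v x) $ i = sum_list (map (\<lambda>(r0, c0, M).
     if r0 \<le> i \<and> i < r0 + dim_row M then (M *\<^sub>v sv c0 (dim_col M) x) $ (i - r0) else 0) bs)"
    by (rule place_mult) (use assms in blast)+
  also have "\<dots> = sum_list (map (rowc i x) bs)"
    by (rule sum_list_map_cong) (simp add: rowc_def split: prod.splits)
  finally show ?thesis .
qed

lemma place_tmult':
  assumes "c \<in> carrier_vec R" "j < C" "\<And>r0 c0 M. (r0, c0, M) \<in> set bs \<Longrightarrow> r0 + dim_row M \<le> R"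
  shows "(transpose_mat (place R C bs) *\<^sub>v c) $ j = sum_list (map (colc j c) bs)"
proof -
  have "(transpose_mat (place R C bs) *\<^sub>v c) $ j = sum_list (map (\<lambda>(r0, c0, M).
     if c0 \<le> j \<and> j < c0 + dim_col M then (transpose_mat M *\<^sub>v sv r0 (dim_row M) c) $ (j - c0) else 0) bs)"
    by (rule place_tmult) (use assms in blast)+
  also have "\<dots> = sum_list (map (colc j c) bs)"
    by (rule sum_list_map_cong) (simp add: colc_def split: prod.splits)
  finally show ?thesis .
qed

lemma sum_list_zero: "(\<And>b. b \<in> set L \<Longrightarrow> f b = (0::'a::monoid_add)) \<Longrightarrow> sum_list (map f L) = 0"
  by (induction L) auto

lemma sum_list_concat_map: "sum_list (map f (concat xss)) = sum_list (map (\<lambda>xs. sum_list (map f xs)) xss)"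
  for f :: "'b \<Rightarrow> 'a::monoid_add"
  by (induction xss) auto

lemma sum_list_concat_map_upt: "sum_list (map f (concat (map g [a..<b]))) = (\<Sum>j\<in>{a..<b}. sum_list (map f (g j)))"
  for f :: "'b \<Rightarrow> 'a::comm_monoid_add"
  unfolding sum_list_concat_map map_map interv_sum_list_conv_sum_set_nat by (simp add: comp_def)

lemma sum_single: assumes "finite A" "j \<in> A" "\<And>j'. j' \<in> A \<Longrightarrow> j' \<noteq> j \<Longrightarrow> F j' = 0"
  shows "sum F A = F j"
proof -
  have "sum F A = F j + sum F (A - {j})" using assms by (simp add: sum.remove)
  also have "sum F (A - {j}) = 0" using assms by (intro sum.neutral) auto
  finally show ?thesis by simp
qed

lemma blk_uniq: fixes i' m j j' a :: nat assumes "i' < m" "1 \<le> j" "1 \<le> j'"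
  and "a + (j' - 1) * m \<le> a + (j - 1) * m + i'" "a + (j - 1) * m + i' < a + (j' - 1) * m + m"
  shows "j' = j"
proof -
  obtain x where x: "j' = Suc x" using assms(3) by (cases j') auto
  obtain y where y: "j = Suc y" using assms(2) by (cases j) auto
  have 1: "x * m \<le> y * m + i'" using assms(4) unfolding x y by simp
  have 2: "y * m + i' < x * m + m" using assms(5) unfolding x y by simp
  have "x * m < (y + 1) * m" using 1 assms(1) by simp
  then have "x < y + 1" by (metis mult_less_cancel2)
  moreover have "y * m < (x + 1) * m" using 2 by simp
  then have "y < x + 1" by (metis mult_less_cancel2)
  ultimately have "x = y" by simp
  then show ?thesis using x y by simp
qed

lemma mult_pred_le: "1 \<le> j \<Longrightarrow> j \<le> m \<Longrightarrow> (j - 1) * a + a \<le> m * (a::nat)"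
proof -
  assume "1 \<le> j" "j \<le> m"
  then have "(j - 1) * a + a = j * a" by (cases j) auto
  also have "\<dots> \<le> m * a" using \<open>j \<le> m\<close> by (rule mult_le_mono1)
  finally show ?thesis .
qed

lemma mult_pred_le': "j \<le> m \<Longrightarrow> (j - 1) * (a::nat) \<le> m * a"
  by (meson diff_le_self le_trans mult_le_mono1)

locale code_dims =
  fixes HX HZ HG S T :: "bit mat" and n rX rZ nG rG dR :: nat
  assumes HX: "HX \<in> carrier_mat rX n" and HZ: "HZ \<in> carrier_mat rZ n"
    and HG: "HG \<in> carrier_mat rG nG" and S: "S \<in> carrier_mat nG n" and T: "T \<in> carrier_mat rX rG"
    and dR: "2 \<le> dR"
begin

abbreviation "U j \<equiv> uoff n nG j"
abbreviation "W j \<equiv> woff n nG dR rG j"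
abbreviation "N \<equiv> NMM n nG rG dR"
abbreviation "e0 e \<equiv> sv 0 n e"
abbreviation "eu e j \<equiv> sv (U j) nG e"
abbreviation "ew e j \<equiv> sv (W j) rG e"

lemma dimsH[simp]: "dim_row HX = rX" "dim_col HX = n" "dim_row HZ = rZ" "dim_col HZ = n"
  "dim_row HG = rG" "dim_col HG = nG" "dim_row S = nG" "dim_col S = n" "dim_row T = rX" "dim_col T = rG"
  using HX HZ HG S T by auto

lemma U_ge: "n \<le> U j" by (simp add: uoff_def)
lemma W_ge: "n + (dR - 1) * nG \<le> W j" by (simp add: woff_def)
lemma U_fit: "1 \<le> j \<Longrightarrow> j \<le> dR - 1 \<Longrightarrow> U j + nG \<le> N"
  using mult_pred_le[of j "dR - 1" nG] by (simp add: uoff_def NMM_def)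
lemma W_fit: "1 \<le> j \<Longrightarrow> j \<le> dR \<Longrightarrow> W j + rG \<le> N"
  using mult_pred_le[of j dR rG] by (simp add: woff_def NMM_def)

definition "HXbl = [(0, 0, HX), (0, W 1, T)] @
       concat (map (\<lambda>j. [(rX + (j - 1) * rG, U j, HG), (rX + (j - 1) * rG, W j, 1\<^sub>m rG),
           (rX + (j - 1) * rG, W (j + 1), 1\<^sub>m rG)]) [1..<dR])"

lemma HXd_eq: "HX_MM dR HX HG T = place (rX + (dR - 1) * rG) N HXbl"
  by (simp add: HX_MM_def HXbl_def Let_def)

lemma HXbl_fit: assumes b: "(r0, c0, M) \<in> set HXbl" shows "c0 + dim_col M \<le> N"
proof -
  consider "c0 = 0 \<and> M = HX" | "c0 = W 1 \<and> M = T" |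
    j where "1 \<le> j" "j < dR" "(c0 = U j \<and> M = HG) \<or> (c0 = W j \<and> M = 1\<^sub>m rG) \<or> (c0 = W (j + 1) \<and> M = 1\<^sub>m rG)"
    using b unfolding HXbl_def by auto
  then show ?thesis
  proof cases
    case 1 then show ?thesis by (simp add: NMM_def)
  next
    case 2 then show ?thesis using W_fit[of 1] dR by simp
  next
    case (3 j)
    then show ?thesis using U_fit[of j] W_fit[of j] W_fit[of "j + 1"] by auto
  qed
qed

lemma HXd_row0: assumes e: "e \<in> carrier_vec N" and i: "i < rX"
  shows "(HX_MM dR HX HG T *\<^sub>v e) $ i = (HX *\<^sub>v e0 e) $ i + (T *\<^sub>v ew e 1) $ i"
proof -
  have "(HX_MM dR HX HG T *\<^sub>v e) $ i = sum_list (map (rowc i e) HXbl)"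
    unfolding HXd_eq using e i HXbl_fit by (intro place_mult') auto
  also have "\<dots> = rowc i e (0, 0, HX) + rowc i e (0, W 1, T) +
     sum_list (map (rowc i e) (concat (map (\<lambda>j. [(rX + (j - 1) * rG, U j, HG), (rX + (j - 1) * rG, W j, 1\<^sub>m rG),
           (rX + (j - 1) * rG, W (j + 1), 1\<^sub>m rG)]) [1..<dR])))"
    unfolding HXbl_def map_append sum_list_append list.map sum_list.Cons sum_list.Nil by (simp only: add.assoc add_0_right)
  also have "sum_list (map (rowc i e) (concat (map (\<lambda>j. [(rX + (j - 1) * rG, U j, HG), (rX + (j - 1) * rG, W j, 1\<^sub>m rG),
           (rX + (j - 1) * rG, W (j + 1), 1\<^sub>m rG)]) [1..<dR]))) = 0"
    using i by (intro sum_list_zero) (auto intro!: rowc_out)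
  also have "rowc i e (0, 0, HX) = (HX *\<^sub>v e0 e) $ i" using i by (subst rowc_in) simp_all
  also have "rowc i e (0, W 1, T) = (T *\<^sub>v ew e 1) $ i" using i by (subst rowc_in) simp_all
  finally show ?thesis by (simp only: add_0_right)
qed

lemma HXd_rowj: assumes e: "e \<in> carrier_vec N" and j: "1 \<le> j" "j < dR" and i: "i < rG"
  shows "(HX_MM dR HX HG T *\<^sub>v e) $ (rX + (j - 1) * rG + i) = (HG *\<^sub>v eu e j) $ i + ew e j $ i + ew e (j + 1) $ i"
proof -
  let ?i = "rX + (j - 1) * rG + i"
  let ?g = "\<lambda>j. [(rX + (j - 1) * rG, U j, HG), (rX + (j - 1) * rG, W j, 1\<^sub>m rG),
           (rX + (j - 1) * rG, W (j + 1), 1\<^sub>m rG)]"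
  have "j \<le> dR - 1" using j by simp
  then have R: "?i < rX + (dR - 1) * rG" using j i mult_pred_le[of j "dR - 1" rG] by linarith
  have "(HX_MM dR HX HG T *\<^sub>v e) $ ?i = sum_list (map (rowc ?i e) HXbl)"
    unfolding HXd_eq using e R HXbl_fit by (intro place_mult') auto
  also have "\<dots> = rowc ?i e (0, 0, HX) + rowc ?i e (0, W 1, T) +
     sum_list (map (rowc ?i e) (concat (map ?g [1..<dR])))"
    unfolding HXbl_def map_append sum_list_append list.map sum_list.Cons sum_list.Nil by (simp only: add.assoc add_0_right)
  also have "rowc ?i e (0, 0, HX) = 0" by (intro rowc_out) simp
  also have "rowc ?i e (0, W 1, T) = 0" by (intro rowc_out) simp
  also have "sum_list (map (rowc ?i e) (concat (map ?g [1..<dR]))) = (\<Sum>j'\<in>{1..<dR}. sum_list (map (rowc ?i e) (?g j')))"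
    by (rule sum_list_concat_map_upt)
  also have "\<dots> = sum_list (map (rowc ?i e) (?g j))"
  proof (rule sum_single)
    show "j \<in> {1..<dR}" using j by simp
    fix j' assume j': "j' \<in> {1..<dR}" "j' \<noteq> j"
    have "\<not> (rX + (j' - 1) * rG \<le> ?i \<and> ?i < rX + (j' - 1) * rG + rG)"
      using blk_uniq[of i rG j j' rX] i j j' by auto
    then show "sum_list (map (rowc ?i e) (?g j')) = 0" by (simp add: rowc_out)
  qed simp
  also have "\<dots> = (HG *\<^sub>v eu e j) $ i + ew e j $ i + ew e (j + 1) $ i"
  proof -
    have "rowc ?i e (rX + (j - 1) * rG, U j, HG) = (HG *\<^sub>v eu e j) $ i" using i by (subst rowc_in) simp_all
    moreover have "rowc ?i e (rX + (j - 1) * rG, W j, 1\<^sub>m rG) = ew e j $ i" using i by (subst rowc_in) simp_all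
    moreover have "rowc ?i e (rX + (j - 1) * rG, W (j + 1), 1\<^sub>m rG) = ew e (j + 1) $ i" using i by (subst rowc_in) simp_all
    ultimately show ?thesis by (simp only: list.map sum_list.Cons sum_list.Nil add_0_right add.assoc)
  qed
  finally show ?thesis by (simp only: add_0_left)
qed

end


lemma mv_zero: "M \<in> carrier_mat a b \<Longrightarrow> M *\<^sub>v 0\<^sub>v b = (0\<^sub>v a :: bit vec)"
  by (intro eq_vecI) (auto simp: scalar_prod_def)

lemma reidx1: fixes g :: "nat \<Rightarrow> 'a::comm_monoid_add"
  shows "(\<Sum>i\<in>{1..<Suc m}. if 2 \<le> i then g (i - 1) else 0) = (\<Sum>i\<in>{1..<m}. g i)"
  by (induction m) auto

lemma reidx2: fixes g :: "nat \<Rightarrow> 'a::comm_monoid_add"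
  shows "(\<Sum>i\<in>{1..<Suc m}. if i \<le> m - 1 then g i else 0) = (\<Sum>i\<in>{1..<m}. g i)"
proof -
  have "(\<Sum>i\<in>{1..<Suc m}. if i \<le> m - 1 then g i else 0) = (\<Sum>i\<in>{1..<m}. if i \<le> m - 1 then g i else 0)"
    by (cases "m = 0") auto
  also have "\<dots> = (\<Sum>i\<in>{1..<m}. g i)" by (intro sum.cong) auto
  finally show ?thesis .
qed

lemma sum_list_if_single: "sum_list (map f (if P then [x] else [])) = (if P then f x else 0)"
  by simp

lemma tmult_head_ext:
  assumes M: "M \<in> carrier_mat r C0" and C0: "C0 \<le> C" and rR: "r \<le> R"
    and fit: "\<And>r0 c0 M'. (r0, c0, M') \<in> set bs' \<Longrightarrow> r0 + dim_row M' \<le> R"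
    and low: "\<And>r0 c0 M'. (r0, c0, M') \<in> set bs' \<Longrightarrow> r \<le> r0"
    and a: "a \<in> carrier_vec r"
  shows "transpose_mat (place R C ((0, 0, M) # bs')) *\<^sub>v vec R (\<lambda>t. if t < r then a $ t else 0) = ext0 C (transpose_mat M *\<^sub>v a)"
proof (rule eq_vecI)
  show "dim_vec (transpose_mat (place R C ((0, 0, M) # bs')) *\<^sub>v vec R (\<lambda>t. if t < r then a $ t else 0)) = dim_vec (ext0 C (transpose_mat M *\<^sub>v a))"
    by (simp add: ext0_def place_def)
  fix j assume "j < dim_vec (ext0 C (transpose_mat M *\<^sub>v a))"
  then have j: "j < C" by (simp add: ext0_def)
  let ?c = "vec R (\<lambda>t. if t < r then a $ t else 0)"
  have "(transpose_mat (place R C ((0, 0, M) # bs')) *\<^sub>v ?c) $ j = sum_list (map (colc j ?c) ((0, 0, M) # bs'))"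
    using j fit M rR by (intro place_tmult') auto
  also have "\<dots> = colc j ?c (0, 0, M) + sum_list (map (colc j ?c) bs')" by simp
  also have "sum_list (map (colc j ?c) bs') = 0"
  proof (rule sum_list_zero)
    fix b assume b: "b \<in> set bs'"
    obtain r0 c0 M' where bb: "b = (r0, c0, M')" by (cases b) auto
    have z: "sv r0 (dim_row M') ?c = 0\<^sub>v (dim_row M')"
      using fit[of r0 c0 M'] low[of r0 c0 M'] b bb by (intro eq_vecI) auto
    show "colc j ?c b = 0"
    proof (cases "c0 \<le> j \<and> j < c0 + dim_col M'")
      case True
      have "transpose_mat M' *\<^sub>v sv r0 (dim_row M') ?c = 0\<^sub>v (dim_col M')" unfolding z by (rule mv_zero) simp
      then show ?thesis unfolding bb using True by (subst colc_in) auto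
    next
      case False then show ?thesis unfolding bb by (rule colc_out)
    qed
  qed
  also have "sv 0 (dim_row M) ?c = a" using M a rR by (intro eq_vecI) auto
  then have "colc j ?c (0, 0, M) = (if j < C0 then (transpose_mat M *\<^sub>v a) $ j else 0)"
    using M by (simp add: colc_def)
  finally show "(transpose_mat (place R C ((0, 0, M) # bs')) *\<^sub>v ?c) $ j = ext0 C (transpose_mat M *\<^sub>v a) $ j"
    using j M by (simp add: ext0_def)
qed

lemma tmult_head_restr:
  assumes M: "M \<in> carrier_mat r C0" and C0: "C0 \<le> C" and rR: "r \<le> R"
    and fit: "\<And>r0 c0 M'. (r0, c0, M') \<in> set bs' \<Longrightarrow> r0 + dim_row M' \<le> R"
    and right: "\<And>r0 c0 M'. (r0, c0, M') \<in> set bs' \<Longrightarrow> C0 \<le> c0"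
    and c: "c \<in> carrier_vec R"
  shows "restr C0 (transpose_mat (place R C ((0, 0, M) # bs')) *\<^sub>v c) = transpose_mat M *\<^sub>v sv 0 r c"
proof (rule eq_vecI)
  show "dim_vec (restr C0 (transpose_mat (place R C ((0, 0, M) # bs')) *\<^sub>v c)) = dim_vec (transpose_mat M *\<^sub>v sv 0 r c)"
    using M by (simp add: restr_def)
  fix j assume "j < dim_vec (transpose_mat M *\<^sub>v sv 0 r c)"
  then have j: "j < C0" using M by simp
  have "(transpose_mat (place R C ((0, 0, M) # bs')) *\<^sub>v c) $ j = sum_list (map (colc j c) ((0, 0, M) # bs'))"
    using j C0 fit M rR c by (intro place_tmult') auto
  also have "\<dots> = colc j c (0, 0, M) + sum_list (map (colc j c) bs')" by simp
  also have "sum_list (map (colc j c) bs') = 0"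
  proof (rule sum_list_zero)
    fix b assume b: "b \<in> set bs'"
    obtain r0 c0 M' where bb: "b = (r0, c0, M')" by (cases b) auto
    show "colc j c b = 0" unfolding bb using right[of r0 c0 M'] b bb j by (intro colc_out) auto
  qed
  also have "colc j c (0, 0, M) = (transpose_mat M *\<^sub>v sv 0 r c) $ j"
    using M j by (subst colc_in) auto
  finally show "restr C0 (transpose_mat (place R C ((0, 0, M) # bs')) *\<^sub>v c) $ j = (transpose_mat M *\<^sub>v sv 0 r c) $ j"
    using j C0 by (simp add: restr_def)
qed

lemma mult_head_row:
  assumes M: "M \<in> carrier_mat r C0" and C0: "C0 \<le> C" and i: "i < r" and rR: "r \<le> R"
    and fit: "\<And>r0 c0 M'. (r0, c0, M') \<in> set bs' \<Longrightarrow> c0 + dim_col M' \<le> C"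
    and low: "\<And>r0 c0 M'. (r0, c0, M') \<in> set bs' \<Longrightarrow> r \<le> r0"
    and e: "e \<in> carrier_vec C"
  shows "(place R C ((0, 0, M) # bs') *\<^sub>v e) $ i = (M *\<^sub>v sv 0 C0 e) $ i"
proof -
  have "(place R C ((0, 0, M) # bs') *\<^sub>v e) $ i = sum_list (map (rowc i e) ((0, 0, M) # bs'))"
    using i fit M rR e C0 by (intro place_mult') auto
  also have "\<dots> = rowc i e (0, 0, M) + sum_list (map (rowc i e) bs')" by simp
  also have "sum_list (map (rowc i e) bs') = 0"
  proof (rule sum_list_zero)
    fix b assume b: "b \<in> set bs'"
    obtain r0 c0 M' where bb: "b = (r0, c0, M')" by (cases b) auto
    show "rowc i e b = 0" unfolding bb using low[of r0 c0 M'] b bb i by (intro rowc_out) auto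
  qed
  also have "rowc i e (0, 0, M) = (M *\<^sub>v sv 0 C0 e) $ i"
    using M i by (subst rowc_in) auto
  finally show ?thesis by simp
qed


lemma zero_idx: "c0 \<le> j \<and> j < c0 + m \<longrightarrow> (0\<^sub>v m :: bit vec) $ (j - c0) = 0"
  by auto

context code_dims begin

lemma N_ge: "n \<le> N" by (simp add: NMM_def)
lemma W_ge_n: "n \<le> W j" using W_ge[of j] by simp

definition "HXtail = concat (map (\<lambda>j. [(rX + (j - 1) * rG, U j, HG), (rX + (j - 1) * rG, W j, 1\<^sub>m rG),
           (rX + (j - 1) * rG, W (j + 1), 1\<^sub>m rG)]) [1..<dR])"

lemma HXbl_eq: "HXbl = (0, 0, HX) # (0, W 1, T) # HXtail"
  by (simp add: HXbl_def HXtail_def)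

lemma HXtail_cases: assumes "(r0, c0, M) \<in> set HXtail"
  obtains j where "1 \<le> j" "j < dR" "r0 = rX + (j - 1) * rG"
      "(c0 = U j \<and> M = HG) \<or> (c0 = W j \<and> M = 1\<^sub>m rG) \<or> (c0 = W (j + 1) \<and> M = 1\<^sub>m rG)"
  using assms unfolding HXtail_def by auto

lemma HXd_restr: assumes c: "c \<in> carrier_vec (rX + (dR - 1) * rG)"
  shows "restr n (transpose_mat (HX_MM dR HX HG T) *\<^sub>v c) = transpose_mat HX *\<^sub>v sv 0 rX c"
  unfolding HXd_eq HXbl_eq
proof (rule tmult_head_restr[OF HX N_ge _ _ _ c])
  show "rX \<le> rX + (dR - 1) * rG" by simp
  fix r0 c0 M' assume b: "(r0, c0, M') \<in> set ((0, W 1, T) # HXtail)"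
  then consider "(r0, c0, M') = (0, W 1, T)" | "(r0, c0, M') \<in> set HXtail" by auto
  then show "r0 + dim_row M' \<le> rX + (dR - 1) * rG"
  proof cases
    case 2 then show ?thesis by (rule HXtail_cases) (use mult_pred_le[of _ "dR - 1" rG] in auto)
  qed simp
  from b consider "(r0, c0, M') = (0, W 1, T)" | "(r0, c0, M') \<in> set HXtail" by auto
  then show "n \<le> c0"
  proof cases
    case 2 then show ?thesis by (rule HXtail_cases) (use U_ge W_ge_n in auto)
  qed (use W_ge_n in simp)
qed


definition "JXtail JXC \<gamma> = map (\<lambda>j. (0, U j, JXC * transpose_mat S)) [1..<dR] @ [(0, W dR, \<gamma>)]"

lemma JXd_eq: assumes "JXC \<in> carrier_mat kq n"
  shows "JX_MM dR JXC HG S \<gamma> = place kq N ((0, 0, JXC) # JXtail JXC \<gamma>)"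
  using assms by (simp add: JX_MM_def JXtail_def Let_def)

lemma JXd_restr: assumes JXC: "JXC \<in> carrier_mat kq n" and g: "\<gamma> \<in> carrier_mat kq rG" and b: "b \<in> carrier_vec kq"
  shows "restr n (transpose_mat (JX_MM dR JXC HG S \<gamma>) *\<^sub>v b) = transpose_mat JXC *\<^sub>v b"
proof -
  have "restr n (transpose_mat (JX_MM dR JXC HG S \<gamma>) *\<^sub>v b) = transpose_mat JXC *\<^sub>v sv 0 kq b"
    unfolding JXd_eq[OF JXC]
  proof (rule tmult_head_restr[OF JXC N_ge order_refl _ _ b])
    fix r0 c0 :: nat and M' :: "bit mat" assume "(r0, c0, M') \<in> set (JXtail JXC \<gamma>)"
    then show "r0 + dim_row M' \<le> kq" "n \<le> c0" using JXC g U_ge W_ge_n by (auto simp: JXtail_def)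
  qed
  also have "sv 0 kq b = b" using b by (intro eq_vecI) auto
  finally show ?thesis .
qed

lemma JXd_row: assumes JXC: "JXC \<in> carrier_mat kq n" and g: "\<gamma> \<in> carrier_mat kq rG"
  and e: "e \<in> carrier_vec N" and r: "r < kq"
  shows "(JX_MM dR JXC HG S \<gamma> *\<^sub>v e) $ r = (JXC *\<^sub>v e0 e) $ r +
     (\<Sum>j\<in>{1..<dR}. ((JXC * transpose_mat S) *\<^sub>v eu e j) $ r) + (\<gamma> *\<^sub>v ew e dR) $ r"
proof -
  have "(JX_MM dR JXC HG S \<gamma> *\<^sub>v e) $ r = sum_list (map (rowc r e) ((0, 0, JXC) # JXtail JXC \<gamma>))"
    unfolding JXd_eq[OF JXC]
  proof (rule place_mult'[OF e r])
    fix r0 c0 :: nat and M' :: "bit mat" assume "(r0, c0, M') \<in> set ((0, 0, JXC) # JXtail JXC \<gamma>)"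
    then show "c0 + dim_col M' \<le> N"
      using JXC g N_ge U_fit W_fit[of dR] dR by (auto simp: JXtail_def)
  qed
  also have "\<dots> = rowc r e (0, 0, JXC) + sum_list (map (\<lambda>j. rowc r e (0, U j, JXC * transpose_mat S)) [1..<dR]) + rowc r e (0, W dR, \<gamma>)"
    unfolding JXtail_def list.map map_append map_map sum_list_append sum_list.Cons sum_list.Nil comp_def
    by (simp only: add.assoc add_0_right)
  also have "rowc r e (0, 0, JXC) = (JXC *\<^sub>v e0 e) $ r" using JXC r by (subst rowc_in) auto
  also have "rowc r e (0, W dR, \<gamma>) = (\<gamma> *\<^sub>v ew e dR) $ r" using g r by (subst rowc_in) auto
  also have "sum_list (map (\<lambda>j. rowc r e (0, U j, JXC * transpose_mat S)) [1..<dR]) =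
     (\<Sum>j\<in>{1..<dR}. ((JXC * transpose_mat S) *\<^sub>v eu e j) $ r)"
    unfolding interv_sum_list_conv_sum_set_nat set_upt
    using JXC r by (intro sum.cong refl) (subst rowc_in, auto)
  finally show ?thesis .
qed

definition "HZtail = concat (map (\<lambda>i. (if i = 1 then [(rZ + (i - 1) * nG, 0, S)] else []) @
   (if 2 \<le> i then [(rZ + (i - 1) * nG, U (i - 1), 1\<^sub>m nG)] else []) @
   (if i \<le> dR - 1 then [(rZ + (i - 1) * nG, U i, 1\<^sub>m nG)] else []) @
   [(rZ + (i - 1) * nG, W i, transpose_mat HG)]) [1..<dR + 1])"

lemma HZd_eq: "HZ_MM dR HZ HG S = place (rZ + dR * nG) N ((0, 0, HZ) # HZtail)"
  unfolding HZ_MM_def HZtail_def Let_def dimsH append_Cons append_Nil ..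

lemma HZtail_cases: assumes "(r0, c0, M) \<in> set HZtail"
  obtains i where "1 \<le> i" "i \<le> dR" "r0 = rZ + (i - 1) * nG"
    "(c0 = 0 \<and> M = S \<and> i = 1) \<or> (c0 = U (i - 1) \<and> M = 1\<^sub>m nG \<and> 2 \<le> i) \<or>
     (c0 = U i \<and> M = 1\<^sub>m nG \<and> i \<le> dR - 1) \<or> (c0 = W i \<and> M = transpose_mat HG)"
proof -
  from assms obtain i where i: "i \<in> {1..<dR + 1}" and b: "(r0, c0, M) \<in> set ((if i = 1 then [(rZ + (i - 1) * nG, 0, S)] else []) @
   (if 2 \<le> i then [(rZ + (i - 1) * nG, U (i - 1), 1\<^sub>m nG)] else []) @
   (if i \<le> dR - 1 then [(rZ + (i - 1) * nG, U i, 1\<^sub>m nG)] else []) @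
   [(rZ + (i - 1) * nG, W i, transpose_mat HG)])"
    unfolding HZtail_def set_concat set_map set_upt image_image by blast
  show thesis using that[of i] i b by (auto split: if_splits)
qed

lemma HZtail_fit: assumes "(r0, c0, M) \<in> set HZtail"
  shows "c0 + dim_col M \<le> N" "r0 + dim_row M \<le> rZ + dR * nG" "rZ \<le> r0"
proof -
  obtain i where i: "1 \<le> i" "i \<le> dR" "r0 = rZ + (i - 1) * nG"
    "(c0 = 0 \<and> M = S \<and> i = 1) \<or> (c0 = U (i - 1) \<and> M = 1\<^sub>m nG \<and> 2 \<le> i) \<or>
     (c0 = U i \<and> M = 1\<^sub>m nG \<and> i \<le> dR - 1) \<or> (c0 = W i \<and> M = transpose_mat HG)"
    using assms by (rule HZtail_cases)
  show "c0 + dim_col M \<le> N"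
    using i N_ge U_fit[of "i - 1"] U_fit[of i] W_fit[of i] by auto
  have "dim_row M = nG" using i by auto
  then show "r0 + dim_row M \<le> rZ + dR * nG" using i mult_pred_le[of i dR nG] by simp
  show "rZ \<le> r0" using i by simp
qed

lemma HZd_row0: assumes e: "e \<in> carrier_vec N" and i: "i < rZ"
  shows "(HZ_MM dR HZ HG S *\<^sub>v e) $ i = (HZ *\<^sub>v e0 e) $ i"
  unfolding HZd_eq
  by (rule mult_head_row[OF HZ N_ge i _ _ _ e]) (auto dest: HZtail_fit)

lemma HZd_ext: assumes a: "a \<in> carrier_vec rZ"
  shows "transpose_mat (HZ_MM dR HZ HG S) *\<^sub>v vec (rZ + dR * nG) (\<lambda>t. if t < rZ then a $ t else 0) =
    ext0 N (transpose_mat HZ *\<^sub>v a)"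
  unfolding HZd_eq
  by (rule tmult_head_ext[OF HZ N_ge _ _ _ a]) (auto dest: HZtail_fit)

lemma JZd_eq: assumes "JZC \<in> carrier_mat kq n"
  shows "JZ_MM dR JZC HG = place kq N [(0, 0, JZC)]"
  using assms by (simp add: JZ_MM_def Let_def)

lemma JZd_row: assumes JZC: "JZC \<in> carrier_mat kq n" and e: "e \<in> carrier_vec N" and r: "r < kq"
  shows "(JZ_MM dR JZC HG *\<^sub>v e) $ r = (JZC *\<^sub>v e0 e) $ r"
  unfolding JZd_eq[OF JZC] by (rule mult_head_row[OF JZC N_ge r _ _ _ e]) auto

lemma JZd_ext: assumes JZC: "JZC \<in> carrier_mat kq n" and b: "b \<in> carrier_vec kq"
  shows "transpose_mat (JZ_MM dR JZC HG) *\<^sub>v b = ext0 N (transpose_mat JZC *\<^sub>v b)"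
proof -
  have "b = vec kq (\<lambda>t. if t < kq then b $ t else 0)" using b by (intro eq_vecI) auto
  then have "transpose_mat (JZ_MM dR JZC HG) *\<^sub>v b = transpose_mat (place kq N [(0, 0, JZC)]) *\<^sub>v vec kq (\<lambda>t. if t < kq then b $ t else 0)"
    unfolding JZd_eq[OF JZC] by simp
  also have "\<dots> = ext0 N (transpose_mat JZC *\<^sub>v b)"
    by (rule tmult_head_ext[OF JZC N_ge _ _ _ b]) auto
  finally show ?thesis .
qed


lemma HZd_tele: assumes c: "c \<in> carrier_vec nG" and Hc: "HG *\<^sub>v c = 0\<^sub>v rG"
  shows "transpose_mat (HZ_MM dR HZ HG S) *\<^sub>v vec (rZ + dR * nG) (\<lambda>t. if t < rZ then 0 else c $ ((t - rZ) mod nG))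
    = ext0 N (transpose_mat S *\<^sub>v c)"
    (is "_ *\<^sub>v ?cc = _")
proof (rule eq_vecI)
  let ?R = "rZ + dR * nG"
  have svc: "sv (rZ + (i - 1) * nG) nG ?cc = c" if i: "1 \<le> i" "i \<le> dR" for i
  proof (rule eq_vecI)
    fix t assume t: "t < dim_vec c"
    then have t': "t < nG" using c by simp
    have "rZ + (i - 1) * nG + t < ?R" using t' mult_pred_le[of i dR nG] i by linarith
    then show "sv (rZ + (i - 1) * nG) nG ?cc $ t = c $ t" using t' by simp
  qed (use c in simp)
  have sv0: "sv 0 rZ ?cc = 0\<^sub>v rZ" by (intro eq_vecI) auto
  show "dim_vec (transpose_mat (HZ_MM dR HZ HG S) *\<^sub>v ?cc) = dim_vec (ext0 N (transpose_mat S *\<^sub>v c))"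
    by (simp add: HZd_eq ext0_def place_def)
  fix j assume "j < dim_vec (ext0 N (transpose_mat S *\<^sub>v c))"
  then have j: "j < N" by (simp add: ext0_def)
  have colc_gen: "colc j ?cc (rZ + (i - 1) * nG, co, M) = (if co \<le> j \<and> j < co + m then (transpose_mat M *\<^sub>v c) $ (j - co) else 0)"
    if i: "1 \<le> i" "i \<le> dR" and M: "M \<in> carrier_mat nG m" for i co m M
    using svc[OF i] M by (simp add: colc_def)
  define s0 where "s0 = (if j < n then (transpose_mat S *\<^sub>v c) $ j else 0)"
  define g where "g i = (if U i \<le> j \<and> j < U i + nG then c $ (j - U i) else 0)" for i
  have "(transpose_mat (HZ_MM dR HZ HG S) *\<^sub>v ?cc) $ j = sum_list (map (colc j ?cc) ((0, 0, HZ) # HZtail))"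
    unfolding HZd_eq
  proof (rule place_tmult'[OF _ j])
    fix r0 c0 :: nat and M :: "bit mat" assume "(r0, c0, M) \<in> set ((0, 0, HZ) # HZtail)"
    then show "r0 + dim_row M \<le> ?R" using HZtail_fit(2)[of r0 c0 M] by auto
  qed simp
  also have "\<dots> = colc j ?cc (0, 0, HZ) + sum_list (map (colc j ?cc) HZtail)" by simp
  also have "colc j ?cc (0, 0, HZ) = 0"
  proof (cases "j < n")
    case True
    have "transpose_mat HZ *\<^sub>v sv 0 rZ ?cc = 0\<^sub>v n" unfolding sv0 by (rule mv_zero) (use HZ in auto)
    then show ?thesis using True by (subst colc_in) auto
  next
    case False then show ?thesis by (intro colc_out) simp
  qed
  also have "sum_list (map (colc j ?cc) HZtail) =
      (\<Sum>i\<in>{1..<dR + 1}. (if i = 1 then s0 else 0) + (if 2 \<le> i then g (i - 1) else 0) + (if i \<le> dR - 1 then g i else 0))"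
    unfolding HZtail_def sum_list_concat_map_upt
  proof (rule sum.cong[OF refl])
    fix i assume "i \<in> {1..<dR + 1}"
    then have i: "1 \<le> i" "i \<le> dR" by auto
    have a: "colc j ?cc (rZ + (i - 1) * nG, 0, S) = s0"
      using svc[OF i] S by (simp add: colc_def s0_def)
    have b: "colc j ?cc (rZ + (i - 1) * nG, U i', 1\<^sub>m nG) = g i'" for i'
      using svc[OF i] c by (simp add: colc_def g_def)
    have d: "colc j ?cc (rZ + (i - 1) * nG, W i, transpose_mat HG) = 0"
      using svc[OF i] HG Hc zero_idx[of "W i" j rG] by (simp add: colc_def)
    show "sum_list (map (colc j ?cc) ((if i = 1 then [(rZ + (i - 1) * nG, 0, S)] else []) @
      (if 2 \<le> i then [(rZ + (i - 1) * nG, U (i - 1), 1\<^sub>m nG)] else []) @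
      (if i \<le> dR - 1 then [(rZ + (i - 1) * nG, U i, 1\<^sub>m nG)] else []) @
      [(rZ + (i - 1) * nG, W i, transpose_mat HG)])) =
      (if i = 1 then s0 else 0) + (if 2 \<le> i then g (i - 1) else 0) + (if i \<le> dR - 1 then g i else 0)"
      unfolding map_append sum_list_append sum_list_if_single list.map sum_list.Cons sum_list.Nil a b d
      by (simp only: add_0_right add.assoc)
  qed
  also have "\<dots> = (\<Sum>i\<in>{1..<dR + 1}. if i = 1 then s0 else 0) + (\<Sum>i\<in>{1..<dR + 1}. if 2 \<le> i then g (i - 1) else 0)
      + (\<Sum>i\<in>{1..<dR + 1}. if i \<le> dR - 1 then g i else 0)"
    by (simp only: sum.distrib)
  also have "(\<Sum>i\<in>{1..<dR + 1}. if i = 1 then s0 else 0) = s0" using dR by (simp add: sum.delta)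
  also have "(\<Sum>i\<in>{1..<dR + 1}. if 2 \<le> i then g (i - 1) else 0) = (\<Sum>i\<in>{1..<dR}. g i)"
    using reidx1[of g dR] by simp
  also have "(\<Sum>i\<in>{1..<dR + 1}. if i \<le> dR - 1 then g i else 0) = (\<Sum>i\<in>{1..<dR}. g i)"
    using reidx2[of dR g] by simp
  finally have "(transpose_mat (HZ_MM dR HZ HG S) *\<^sub>v ?cc) $ j = s0"
    by (simp only: add_0_left add.assoc bit_add_self add_0_right)
  then show "(transpose_mat (HZ_MM dR HZ HG S) *\<^sub>v ?cc) $ j = ext0 N (transpose_mat S *\<^sub>v c) $ j"
    using j S by (simp add: ext0_def s0_def)
qed

end


context code_dims begin

abbreviation "NB \<equiv> NMB n nG rG dR"

lemma NB_ge: "n \<le> NB" by (simp add: NMB_def)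
lemma U_fitB: "1 \<le> j \<Longrightarrow> j \<le> dR - 1 \<Longrightarrow> U j + nG \<le> NB"
  using mult_pred_le[of j "dR - 1" nG] by (simp add: uoff_def NMB_def)
lemma W_fitB: "1 \<le> j \<Longrightarrow> j \<le> dR - 1 \<Longrightarrow> W j + rG \<le> NB"
  using mult_pred_le[of j "dR - 1" rG] by (simp add: woff_def NMB_def)

definition "HXBtail = concat (map (\<lambda>j. [(rX + (j - 1) * rG, U j, HG), (rX + (j - 1) * rG, W j, 1\<^sub>m rG)] @
    (if j \<le> dR - 2 then [(rX + (j - 1) * rG, W (j + 1), 1\<^sub>m rG)] else [])) [1..<dR])"

lemma HXBd_eq: "HX_MB dR HX HG T = place (rX + (dR - 1) * rG) NB ((0, 0, HX) # (0, W 1, T) # HXBtail)"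
  unfolding HX_MB_def HXBtail_def Let_def dimsH append_Cons append_Nil ..

lemma HXBtail_cases: assumes "(r0, c0, M) \<in> set HXBtail"
  obtains j where "1 \<le> j" "j < dR" "r0 = rX + (j - 1) * rG"
      "(c0 = U j \<and> M = HG) \<or> (c0 = W j \<and> M = 1\<^sub>m rG) \<or> (c0 = W (j + 1) \<and> M = 1\<^sub>m rG \<and> j \<le> dR - 2)"
proof -
  from assms obtain j where j: "j \<in> {1..<dR}" and b: "(r0, c0, M) \<in> set ([(rX + (j - 1) * rG, U j, HG), (rX + (j - 1) * rG, W j, 1\<^sub>m rG)] @
    (if j \<le> dR - 2 then [(rX + (j - 1) * rG, W (j + 1), 1\<^sub>m rG)] else []))"
    unfolding HXBtail_def set_concat set_map set_upt image_image by blast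
  show thesis using that[of j] j b by (auto split: if_splits)
qed

lemma HXBbl_fit: assumes b: "(r0, c0, M) \<in> set ((0, 0, HX) # (0, W 1, T) # HXBtail)"
  shows "c0 + dim_col M \<le> NB"
proof -
  from b consider "c0 = 0 \<and> M = HX" | "c0 = W 1 \<and> M = T" | "(r0, c0, M) \<in> set HXBtail" by auto
  then show ?thesis
  proof cases
    case 1 then show ?thesis by (simp add: NB_ge)
  next
    case 2 then show ?thesis using W_fitB[of 1] dR by simp
  next
    case 3
    then show ?thesis by (rule HXBtail_cases) (use U_fitB W_fitB in auto)
  qed
qed

lemma HXBd_row0: assumes e: "e \<in> carrier_vec NB" and i: "i < rX"
  shows "(HX_MB dR HX HG T *\<^sub>v e) $ i = (HX *\<^sub>v e0 e) $ i + (T *\<^sub>v ew e 1) $ i"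
proof -
  have "(HX_MB dR HX HG T *\<^sub>v e) $ i = sum_list (map (rowc i e) ((0, 0, HX) # (0, W 1, T) # HXBtail))"
    unfolding HXBd_eq using e i HXBbl_fit by (intro place_mult') auto
  also have "\<dots> = rowc i e (0, 0, HX) + (rowc i e (0, W 1, T) + sum_list (map (rowc i e) HXBtail))" by simp
  also have "sum_list (map (rowc i e) HXBtail) = 0"
  proof (rule sum_list_zero)
    fix b assume "b \<in> set HXBtail"
    moreover obtain r0 c0 M where bb: "b = (r0, c0, M)" by (cases b) auto
    ultimately have "(r0, c0, M) \<in> set HXBtail" by simp
    then have "rX \<le> r0" by (rule HXBtail_cases) auto
    then show "rowc i e b = 0" unfolding bb using i by (intro rowc_out) auto
  qed
  also have "rowc i e (0, 0, HX) = (HX *\<^sub>v e0 e) $ i" using i by (subst rowc_in) simp_all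
  also have "rowc i e (0, W 1, T) = (T *\<^sub>v ew e 1) $ i" using i by (subst rowc_in) simp_all
  finally show ?thesis by (simp only: add_0_right)
qed

lemma HXBd_rowj: assumes e: "e \<in> carrier_vec NB" and j: "1 \<le> j" "j < dR" and i: "i < rG"
  shows "(HX_MB dR HX HG T *\<^sub>v e) $ (rX + (j - 1) * rG + i) =
    (HG *\<^sub>v eu e j) $ i + ew e j $ i + (if j \<le> dR - 2 then ew e (j + 1) $ i else 0)"
proof -
  let ?i = "rX + (j - 1) * rG + i"
  let ?g = "\<lambda>j. [(rX + (j - 1) * rG, U j, HG), (rX + (j - 1) * rG, W j, 1\<^sub>m rG)] @
    (if j \<le> dR - 2 then [(rX + (j - 1) * rG, W (j + 1), 1\<^sub>m rG)] else [])"
  have "j \<le> dR - 1" using j by simp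
  then have R: "?i < rX + (dR - 1) * rG" using j i mult_pred_le[of j "dR - 1" rG] by linarith
  have "(HX_MB dR HX HG T *\<^sub>v e) $ ?i = sum_list (map (rowc ?i e) ((0, 0, HX) # (0, W 1, T) # HXBtail))"
    unfolding HXBd_eq using e R HXBbl_fit by (intro place_mult') auto
  also have "\<dots> = rowc ?i e (0, 0, HX) + (rowc ?i e (0, W 1, T) + sum_list (map (rowc ?i e) HXBtail))" by simp
  also have "rowc ?i e (0, 0, HX) = 0" by (intro rowc_out) simp
  also have "rowc ?i e (0, W 1, T) = 0" by (intro rowc_out) simp
  also have "sum_list (map (rowc ?i e) HXBtail) = (\<Sum>j'\<in>{1..<dR}. sum_list (map (rowc ?i e) (?g j')))"
    unfolding HXBtail_def by (rule sum_list_concat_map_upt)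
  also have "\<dots> = sum_list (map (rowc ?i e) (?g j))"
  proof (rule sum_single)
    show "j \<in> {1..<dR}" using j by simp
    fix j' assume j': "j' \<in> {1..<dR}" "j' \<noteq> j"
    have "\<not> (rX + (j' - 1) * rG \<le> ?i \<and> ?i < rX + (j' - 1) * rG + rG)"
      using blk_uniq[of i rG j j' rX] i j j' by auto
    then show "sum_list (map (rowc ?i e) (?g j')) = 0" by (intro sum_list_zero) (auto intro!: rowc_out)
  qed simp
  also have "\<dots> = (HG *\<^sub>v eu e j) $ i + ew e j $ i + (if j \<le> dR - 2 then ew e (j + 1) $ i else 0)"
  proof -
    have "rowc ?i e (rX + (j - 1) * rG, U j, HG) = (HG *\<^sub>v eu e j) $ i" using i by (subst rowc_in) simp_all
    moreover have "rowc ?i e (rX + (j - 1) * rG, W j, 1\<^sub>m rG) = ew e j $ i" using i by (subst rowc_in) simp_all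
    moreover have "rowc ?i e (rX + (j - 1) * rG, W (j + 1), 1\<^sub>m rG) = ew e (j + 1) $ i" using i by (subst rowc_in) simp_all
    ultimately show ?thesis
      unfolding map_append sum_list_append sum_list_if_single list.map sum_list.Cons sum_list.Nil
      by (simp only: add_0_right add.assoc)
  qed
  finally show ?thesis by (simp only: add_0_left)
qed

lemma HXBd_restr: assumes c: "c \<in> carrier_vec (rX + (dR - 1) * rG)"
  shows "restr n (transpose_mat (HX_MB dR HX HG T) *\<^sub>v c) = transpose_mat HX *\<^sub>v sv 0 rX c"
  unfolding HXBd_eq
proof (rule tmult_head_restr[OF HX NB_ge _ _ _ c])
  show "rX \<le> rX + (dR - 1) * rG" by simp
  fix r0 c0 M' assume b: "(r0, c0, M') \<in> set ((0, W 1, T) # HXBtail)"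
  then consider "(r0, c0, M') = (0, W 1, T)" | "(r0, c0, M') \<in> set HXBtail" by auto
  then show "r0 + dim_row M' \<le> rX + (dR - 1) * rG"
  proof cases
    case 2 then show ?thesis by (rule HXBtail_cases) (use mult_pred_le[of _ "dR - 1" rG] in auto)
  qed simp
  from b consider "(r0, c0, M') = (0, W 1, T)" | "(r0, c0, M') \<in> set HXBtail" by auto
  then show "n \<le> c0"
  proof cases
    case 2 then show ?thesis by (rule HXBtail_cases) (use U_ge W_ge_n in auto)
  qed (use W_ge_n in simp)
qed

definition "JXBtail JX' = map (\<lambda>j. (0, U j, JX' * transpose_mat S)) [1..<dR]"

lemma JXBd_eq: assumes "JX' \<in> carrier_mat k n"
  shows "JX_MB dR JX' HG S = place k NB ((0, 0, JX') # JXBtail JX')"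
  using assms by (simp add: JX_MB_def JXBtail_def Let_def)

lemma JXBd_restr: assumes JX': "JX' \<in> carrier_mat k n" and b: "b \<in> carrier_vec k"
  shows "restr n (transpose_mat (JX_MB dR JX' HG S) *\<^sub>v b) = transpose_mat JX' *\<^sub>v b"
proof -
  have "restr n (transpose_mat (JX_MB dR JX' HG S) *\<^sub>v b) = transpose_mat JX' *\<^sub>v sv 0 k b"
    unfolding JXBd_eq[OF JX']
  proof (rule tmult_head_restr[OF JX' NB_ge order_refl _ _ b])
    fix r0 c0 :: nat and M' :: "bit mat" assume "(r0, c0, M') \<in> set (JXBtail JX')"
    then show "r0 + dim_row M' \<le> k" "n \<le> c0" using JX' U_ge by (auto simp: JXBtail_def)
  qed
  also have "sv 0 k b = b" using b by (intro eq_vecI) auto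
  finally show ?thesis .
qed

lemma JXBd_row: assumes JX': "JX' \<in> carrier_mat k n" and e: "e \<in> carrier_vec NB" and r: "r < k"
  shows "(JX_MB dR JX' HG S *\<^sub>v e) $ r = (JX' *\<^sub>v e0 e) $ r +
     (\<Sum>j\<in>{1..<dR}. ((JX' * transpose_mat S) *\<^sub>v eu e j) $ r)"
proof -
  have "(JX_MB dR JX' HG S *\<^sub>v e) $ r = sum_list (map (rowc r e) ((0, 0, JX') # JXBtail JX'))"
    unfolding JXBd_eq[OF JX']
  proof (rule place_mult'[OF e r])
    fix r0 c0 :: nat and M' :: "bit mat" assume "(r0, c0, M') \<in> set ((0, 0, JX') # JXBtail JX')"
    then show "c0 + dim_col M' \<le> NB"
      using JX' NB_ge U_fitB by (auto simp: JXBtail_def)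
  qed
  also have "\<dots> = rowc r e (0, 0, JX') + sum_list (map (\<lambda>j. rowc r e (0, U j, JX' * transpose_mat S)) [1..<dR])"
    unfolding JXBtail_def list.map map_map sum_list.Cons comp_def ..
  also have "rowc r e (0, 0, JX') = (JX' *\<^sub>v e0 e) $ r" using JX' r by (subst rowc_in) auto
  also have "sum_list (map (\<lambda>j. rowc r e (0, U j, JX' * transpose_mat S)) [1..<dR]) =
     (\<Sum>j\<in>{1..<dR}. ((JX' * transpose_mat S) *\<^sub>v eu e j) $ r)"
    unfolding interv_sum_list_conv_sum_set_nat set_upt
    using JX' r by (intro sum.cong refl) (subst rowc_in, auto)
  finally show ?thesis .
qed

definition "HZBtail = concat (map (\<lambda>i. (if i = 1 then [(rZ + (i - 1) * nG, 0, S)] else []) @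
   (if 2 \<le> i then [(rZ + (i - 1) * nG, U (i - 1), 1\<^sub>m nG)] else []) @
   [(rZ + (i - 1) * nG, U i, 1\<^sub>m nG), (rZ + (i - 1) * nG, W i, transpose_mat HG)]) [1..<dR])"

lemma HZBd_eq: "HZ_MB dR HZ HG S = place (rZ + (dR - 1) * nG) NB ((0, 0, HZ) # HZBtail)"
  unfolding HZ_MB_def HZBtail_def Let_def dimsH append_Cons append_Nil ..

lemma HZBtail_cases: assumes "(r0, c0, M) \<in> set HZBtail"
  obtains i where "1 \<le> i" "i < dR" "r0 = rZ + (i - 1) * nG"
    "(c0 = 0 \<and> M = S \<and> i = 1) \<or> (c0 = U (i - 1) \<and> M = 1\<^sub>m nG \<and> 2 \<le> i) \<or>
     (c0 = U i \<and> M = 1\<^sub>m nG) \<or> (c0 = W i \<and> M = transpose_mat HG)"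
proof -
  from assms obtain i where i: "i \<in> {1..<dR}" and b: "(r0, c0, M) \<in> set ((if i = 1 then [(rZ + (i - 1) * nG, 0, S)] else []) @
   (if 2 \<le> i then [(rZ + (i - 1) * nG, U (i - 1), 1\<^sub>m nG)] else []) @
   [(rZ + (i - 1) * nG, U i, 1\<^sub>m nG), (rZ + (i - 1) * nG, W i, transpose_mat HG)])"
    unfolding HZBtail_def set_concat set_map set_upt image_image by blast
  show thesis using that[of i] i b by (auto split: if_splits)
qed

lemma HZBtail_fit: assumes "(r0, c0, M) \<in> set HZBtail"
  shows "c0 + dim_col M \<le> NB" "r0 + dim_row M \<le> rZ + (dR - 1) * nG" "rZ \<le> r0"
proof -
  obtain i where i: "1 \<le> i" "i < dR" "r0 = rZ + (i - 1) * nG"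
    "(c0 = 0 \<and> M = S \<and> i = 1) \<or> (c0 = U (i - 1) \<and> M = 1\<^sub>m nG \<and> 2 \<le> i) \<or>
     (c0 = U i \<and> M = 1\<^sub>m nG) \<or> (c0 = W i \<and> M = transpose_mat HG)"
    using assms by (rule HZBtail_cases)
  show "c0 + dim_col M \<le> NB"
    using i NB_ge U_fitB[of "i - 1"] U_fitB[of i] W_fitB[of i] by auto
  have "dim_row M = nG" using i by auto
  then show "r0 + dim_row M \<le> rZ + (dR - 1) * nG" using i mult_pred_le[of i "dR - 1" nG] by simp
  show "rZ \<le> r0" using i by simp
qed

lemma HZBd_row0: assumes e: "e \<in> carrier_vec NB" and i: "i < rZ"
  shows "(HZ_MB dR HZ HG S *\<^sub>v e) $ i = (HZ *\<^sub>v e0 e) $ i"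
  unfolding HZBd_eq
  by (rule mult_head_row[OF HZ NB_ge i _ _ _ e]) (auto dest: HZBtail_fit)

lemma HZBd_ext: assumes a: "a \<in> carrier_vec rZ"
  shows "transpose_mat (HZ_MB dR HZ HG S) *\<^sub>v vec (rZ + (dR - 1) * nG) (\<lambda>t. if t < rZ then a $ t else 0) =
    ext0 NB (transpose_mat HZ *\<^sub>v a)"
  unfolding HZBd_eq
  by (rule tmult_head_ext[OF HZ NB_ge _ _ _ a]) (auto dest: HZBtail_fit)

lemma JZBd_eq: assumes "JZ' \<in> carrier_mat k n"
  shows "JZ_MB dR JZ' HG = place k NB [(0, 0, JZ')]"
  using assms by (simp add: JZ_MB_def Let_def)

lemma JZBd_row: assumes JZ': "JZ' \<in> carrier_mat k n" and e: "e \<in> carrier_vec NB" and r: "r < k"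
  shows "(JZ_MB dR JZ' HG *\<^sub>v e) $ r = (JZ' *\<^sub>v e0 e) $ r"
  unfolding JZBd_eq[OF JZ'] by (rule mult_head_row[OF JZ' NB_ge r _ _ _ e]) auto

lemma JZBd_ext: assumes JZ': "JZ' \<in> carrier_mat k n" and b: "b \<in> carrier_vec k"
  shows "transpose_mat (JZ_MB dR JZ' HG) *\<^sub>v b = ext0 NB (transpose_mat JZ' *\<^sub>v b)"
proof -
  have "b = vec k (\<lambda>t. if t < k then b $ t else 0)" using b by (intro eq_vecI) auto
  then have "transpose_mat (JZ_MB dR JZ' HG) *\<^sub>v b = transpose_mat (place k NB [(0, 0, JZ')]) *\<^sub>v vec k (\<lambda>t. if t < k then b $ t else 0)"
    unfolding JZBd_eq[OF JZ'] by simp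
  also have "\<dots> = ext0 NB (transpose_mat JZ' *\<^sub>v b)"
    by (rule tmult_head_ext[OF JZ' NB_ge _ _ _ b]) auto
  finally show ?thesis .
qed

lemma HZBd_tele: assumes c: "c \<in> carrier_vec nG" and Hc: "HG *\<^sub>v c = 0\<^sub>v rG"
  and j: "j < NB" and ob: "\<not> (U (dR - 1) \<le> j \<and> j < U (dR - 1) + nG)"
  shows "(transpose_mat (HZ_MB dR HZ HG S) *\<^sub>v vec (rZ + (dR - 1) * nG) (\<lambda>t. if t < rZ then 0 else c $ ((t - rZ) mod nG))) $ j
    = ext0 NB (transpose_mat S *\<^sub>v c) $ j"
    (is "(_ *\<^sub>v ?cc) $ _ = _")
proof -
  let ?R = "rZ + (dR - 1) * nG"
  have svc: "sv (rZ + (i - 1) * nG) nG ?cc = c" if i: "1 \<le> i" "i < dR" for i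
  proof (rule eq_vecI)
    fix t assume t: "t < dim_vec c"
    then have t': "t < nG" using c by simp
    have "rZ + (i - 1) * nG + t < ?R" using t' mult_pred_le[of i "dR - 1" nG] i by linarith
    then show "sv (rZ + (i - 1) * nG) nG ?cc $ t = c $ t" using t' by simp
  qed (use c in simp)
  have sv0: "sv 0 rZ ?cc = 0\<^sub>v rZ" by (intro eq_vecI) auto
  define s0 where "s0 = (if j < n then (transpose_mat S *\<^sub>v c) $ j else 0)"
  define g where "g i = (if U i \<le> j \<and> j < U i + nG then c $ (j - U i) else 0)" for i
  have "(transpose_mat (HZ_MB dR HZ HG S) *\<^sub>v ?cc) $ j = sum_list (map (colc j ?cc) ((0, 0, HZ) # HZBtail))"
    unfolding HZBd_eq
  proof (rule place_tmult'[OF _ j])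
    fix r0 c0 :: nat and M :: "bit mat" assume "(r0, c0, M) \<in> set ((0, 0, HZ) # HZBtail)"
    then show "r0 + dim_row M \<le> ?R" using HZBtail_fit(2)[of r0 c0 M] by auto
  qed simp
  also have "\<dots> = colc j ?cc (0, 0, HZ) + sum_list (map (colc j ?cc) HZBtail)" by simp
  also have "colc j ?cc (0, 0, HZ) = 0"
  proof (cases "j < n")
    case True
    have "transpose_mat HZ *\<^sub>v sv 0 rZ ?cc = 0\<^sub>v n" unfolding sv0 by (rule mv_zero) (use HZ in auto)
    then show ?thesis using True by (subst colc_in) auto
  next
    case False then show ?thesis by (intro colc_out) simp
  qed
  also have "sum_list (map (colc j ?cc) HZBtail) =
      (\<Sum>i\<in>{1..<dR}. (if i = 1 then s0 else 0) + (if 2 \<le> i then g (i - 1) else 0) + g i)"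
    unfolding HZBtail_def sum_list_concat_map_upt
  proof (rule sum.cong[OF refl])
    fix i assume "i \<in> {1..<dR}"
    then have i: "1 \<le> i" "i < dR" by auto
    have a: "colc j ?cc (rZ + (i - 1) * nG, 0, S) = s0"
      using svc[OF i] S by (simp add: colc_def s0_def)
    have b: "colc j ?cc (rZ + (i - 1) * nG, U i', 1\<^sub>m nG) = g i'" for i'
      using svc[OF i] c by (simp add: colc_def g_def)
    have d: "colc j ?cc (rZ + (i - 1) * nG, W i, transpose_mat HG) = 0"
      using svc[OF i] HG Hc zero_idx[of "W i" j rG] by (simp add: colc_def)
    show "sum_list (map (colc j ?cc) ((if i = 1 then [(rZ + (i - 1) * nG, 0, S)] else []) @
      (if 2 \<le> i then [(rZ + (i - 1) * nG, U (i - 1), 1\<^sub>m nG)] else []) @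
      [(rZ + (i - 1) * nG, U i, 1\<^sub>m nG), (rZ + (i - 1) * nG, W i, transpose_mat HG)])) =
      (if i = 1 then s0 else 0) + (if 2 \<le> i then g (i - 1) else 0) + g i"
      unfolding map_append sum_list_append sum_list_if_single list.map sum_list.Cons sum_list.Nil a b d
      by (simp only: add_0_right add.assoc)
  qed
  also have "\<dots> = (\<Sum>i\<in>{1..<dR}. if i = 1 then s0 else 0) + (\<Sum>i\<in>{1..<dR}. if 2 \<le> i then g (i - 1) else 0)
      + (\<Sum>i\<in>{1..<dR}. g i)"
    by (simp only: sum.distrib)
  also have "(\<Sum>i\<in>{1..<dR}. if i = 1 then s0 else 0) = s0" using dR by (simp add: sum.delta)
  also have "(\<Sum>i\<in>{1..<dR}. if 2 \<le> i then g (i - 1) else 0) = (\<Sum>i\<in>{1..<dR - 1}. g i)"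
    using reidx1[of g "dR - 1"] dR by (simp add: Suc_diff_1)
  also have "(\<Sum>i\<in>{1..<dR}. g i) = (\<Sum>i\<in>{1..<dR - 1}. g i) + g (dR - 1)"
  proof -
    have eq: "{1..<dR} = {1..<Suc (dR - 1)}" using dR by simp
    have h: "\<not> dR - 1 < 1" using dR by simp
    show ?thesis unfolding eq sum.op_ivl_Suc by (simp only: if_not_P[OF h])
  qed
  also have "g (dR - 1) = 0" unfolding g_def by (rule if_not_P[OF ob])
  finally have "(transpose_mat (HZ_MB dR HZ HG S) *\<^sub>v ?cc) $ j = s0"
    by (simp only: add_0_left add.assoc bit_add_self add_0_right)
  then show ?thesis using j S by (simp add: ext0_def s0_def)
qed

end


lemma bit_eq3: "a + b + c = (0::bit) \<Longrightarrow> a = b + c"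
  by (cases a; cases b; cases c) simp_all

lemma ker_carrier: "e \<in> ker H \<Longrightarrow> e \<in> carrier_vec (dim_col H)"
  by (simp add: ker_def)

lemma ker_zero: "e \<in> ker H \<Longrightarrow> i < dim_row H \<Longrightarrow> (H *\<^sub>v e) $ i = 0"
  by (simp add: ker_def)

context code_dims begin

lemma wt_split_u: assumes e: "e \<in> carrier_vec L" and nL: "n \<le> L"
  and fit: "\<And>j. 1 \<le> j \<Longrightarrow> j \<le> dR - 1 \<Longrightarrow> U j + nG \<le> L"
  shows "wt (e0 e) + (\<Sum>j\<in>{1..<dR}. wt (eu e j)) \<le> wt e"
proof -
  define c where "c (j::nat) = (if j = 0 then 0 else U j)" for j
  define m where "m (j::nat) = (if j = 0 then n else nG)" for j
  have "(\<Sum>j\<in>{0..<dR}. wt (sv (c j) (m j) e)) \<le> wt e"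
  proof (rule wt_blocks)
    fix j assume "j \<in> {0..<dR}"
    then show "c j + m j \<le> dim_vec e" using e nL fit[of j] by (auto simp: c_def m_def)
  next
    fix j j' assume jj: "j \<in> {0..<dR}" "j' \<in> {0..<dR}" "j \<noteq> j'"
    show "{c j..<c j + m j} \<inter> {c j'..<c j' + m j'} = {}"
    proof (rule ccontr)
      assume "{c j..<c j + m j} \<inter> {c j'..<c j' + m j'} \<noteq> {}"
      then obtain x where "x \<in> {c j..<c j + m j} \<inter> {c j'..<c j' + m j'}" by blast
      then have x: "c j \<le> x" "x < c j + m j" "c j' \<le> x" "x < c j' + m j'" by auto
      show False
      proof (cases "j = 0 \<or> j' = 0")
        case True
        then show False using x jj U_ge[of j] U_ge[of j'] by (auto simp: c_def m_def)
      next
        case False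
        then have j1: "1 \<le> j" "1 \<le> j'" by auto
        have "x - n - (j - 1) * nG < nG" using x False by (auto simp: c_def m_def uoff_def)
        moreover have "x = n + (j - 1) * nG + (x - n - (j - 1) * nG)" using x False by (auto simp: c_def uoff_def)
        ultimately have "j' = j"
          using blk_uniq[of "x - n - (j - 1) * nG" nG j j' n] j1 x False by (auto simp: c_def m_def uoff_def)
        then show False using jj by simp
      qed
    qed
  qed simp
  also have "{0..<dR} = insert 0 {1..<dR}" using dR by auto
  finally show ?thesis by (simp add: c_def m_def)
qed

lemma wt_split_w: assumes e: "e \<in> carrier_vec N"
  shows "(\<Sum>j\<in>{1..<dR + 1}. wt (ew e j)) \<le> wt e"
proof (rule wt_blocks)
  fix j assume "j \<in> {1..<dR + 1}"
  then show "W j + rG \<le> dim_vec e" using e W_fit[of j] by auto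
next
  fix j j' assume jj: "j \<in> {1..<dR + 1}" "j' \<in> {1..<dR + 1}" "j \<noteq> j'"
  show "{W j..<W j + rG} \<inter> {W j'..<W j' + rG} = {}"
  proof (rule ccontr)
    assume "{W j..<W j + rG} \<inter> {W j'..<W j' + rG} \<noteq> {}"
    then obtain x where "x \<in> {W j..<W j + rG} \<inter> {W j'..<W j' + rG}" by blast
    then have x: "W j \<le> x" "x < W j + rG" "W j' \<le> x" "x < W j' + rG" by auto
    let ?a = "n + (dR - 1) * nG"
    have lt: "x - W j < rG" using x by linarith
    have eqx: "?a + (j - 1) * rG + (x - W j) = x" using x by (simp add: woff_def)
    have p1: "?a + (j' - 1) * rG \<le> ?a + (j - 1) * rG + (x - W j)" unfolding eqx using x(3) by (simp add: woff_def)
    have p2: "?a + (j - 1) * rG + (x - W j) < ?a + (j' - 1) * rG + rG" unfolding eqx using x(4) by (simp add: woff_def)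
    have "j' = j" using blk_uniq[OF lt _ _ p1 p2] jj by simp
    then show False using jj by simp
  qed
qed simp

lemma distX_MM:
  assumes JXC: "JXC \<in> carrier_mat kq n" and g: "\<gamma> \<in> carrier_mat kq rG"
    and gam: "JXC * transpose_mat S = \<gamma> * HG"
    and compat: "HX * transpose_mat S = T * HG"
    and e: "e \<in> ker (HX_MM dR HX HG T)" and ns: "1 \<le> mat_norm S"
  shows "(\<exists>e0'. e0' \<in> carrier_vec n \<and> HX *\<^sub>v e0' = 0\<^sub>v rX \<and> JXC *\<^sub>v e0' = JX_MM dR JXC HG S \<gamma> *\<^sub>v e
     \<and> real (wt e0') \<le> mat_norm S * real (wt e)) \<or> dR \<le> wt e"
proof -
  have eN: "e \<in> carrier_vec N" using ker_carrier[OF e] by (simp add: HXd_eq place_def)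
  have dimHXd: "dim_row (HX_MM dR HX HG T) = rX + (dR - 1) * rG" by (simp add: HXd_eq place_def)
  have h0: "(HX *\<^sub>v e0 e) $ i + (T *\<^sub>v ew e 1) $ i = 0" if i: "i < rX" for i
  proof -
    have "(HX_MM dR HX HG T *\<^sub>v e) $ i = 0" using ker_zero[OF e] i dimHXd by simp
    then show ?thesis using HXd_row0[OF eN i] by simp
  qed
  have hj: "(HG *\<^sub>v eu e j) $ i = ew e j $ i + ew e (Suc j) $ i" if j: "1 \<le> j" "j < dR" and i: "i < rG" for j i
  proof -
    have "j \<le> dR - 1" using j by simp
    then have "rX + (j - 1) * rG + i < rX + (dR - 1) * rG" using j i mult_pred_le[of j "dR - 1" rG] by linarith
    then have "(HX_MM dR HX HG T *\<^sub>v e) $ (rX + (j - 1) * rG + i) = 0" using ker_zero[OF e] dimHXd by simp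
    then have "(HG *\<^sub>v eu e j) $ i + ew e j $ i + ew e (j + 1) $ i = 0" using HXd_rowj[OF eN j i] by simp
    from bit_eq3[OF this] show ?thesis unfolding Suc_eq_plus1 .
  qed
  define P where "P m = vec nG (\<lambda>t. \<Sum>j\<in>{1..<m}. eu e j $ t)" for m
  have Pc: "P m \<in> carrier_vec nG" for m by (simp add: P_def)
  have HGP: "HG *\<^sub>v P m = ew e 1 + ew e m" if m: "1 \<le> m" "m \<le> dR" for m
  proof (rule eq_vecI)
    fix i assume "i < dim_vec (ew e 1 + ew e m)" then have i: "i < rG" by simp
    have "(HG *\<^sub>v P m) $ i = (\<Sum>j\<in>{1..<m}. (HG *\<^sub>v eu e j) $ i)" unfolding P_def using HG i by (intro mv_sumvec) auto
    also have "\<dots> = (\<Sum>j\<in>{1..<m}. ew e j $ i + ew e (Suc j) $ i)" using hj i m by (intro sum.cong refl) auto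
    also have "\<dots> = ew e 1 $ i + ew e m $ i" by (rule telescope_bit) (use m in simp)
    finally show "(HG *\<^sub>v P m) $ i = (ew e 1 + ew e m) $ i" using i by simp
  qed (use HG in simp)
  have SP: "A *\<^sub>v (transpose_mat S *\<^sub>v v) = (A * transpose_mat S) *\<^sub>v v" if "A \<in> carrier_mat a n" "v \<in> carrier_vec nG" for A a v
    using that S by (simp add: assoc_mult_mat_vec)
  have gHG: "(JXC * transpose_mat S) *\<^sub>v v = \<gamma> *\<^sub>v (HG *\<^sub>v v)" if "v \<in> carrier_vec nG" for v
    unfolding gam using g HG that by (simp add: assoc_mult_mat_vec)
  show ?thesis
  proof (cases "\<exists>j0. 1 \<le> j0 \<and> j0 \<le> dR \<and> ew e j0 = 0\<^sub>v rG")
    case True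
    then obtain j0 where j0: "1 \<le> j0" "j0 \<le> dR" "ew e j0 = 0\<^sub>v rG" by blast
    define e0' where "e0' = e0 e + transpose_mat S *\<^sub>v P j0"
    have e0'c: "e0' \<in> carrier_vec n" unfolding e0'_def
      by (rule add_carrier_vec) (simp, rule mult_mat_vec_carrier[OF _ Pc], use S in simp)
    have HGPj: "HG *\<^sub>v P j0 = ew e 1" using HGP[OF j0(1,2)] j0(3) by simp
    have "HX *\<^sub>v e0' = HX *\<^sub>v e0 e + HX *\<^sub>v (transpose_mat S *\<^sub>v P j0)"
      unfolding e0'_def using HX S Pc by (intro mult_add_distrib_mat_vec) auto
    also have "HX *\<^sub>v (transpose_mat S *\<^sub>v P j0) = (T * HG) *\<^sub>v P j0" using SP[OF HX Pc] compat by simp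
    also have "\<dots> = T *\<^sub>v ew e 1" using T HG Pc HGPj by (simp add: assoc_mult_mat_vec)
    finally have HXe: "HX *\<^sub>v e0' = HX *\<^sub>v e0 e + T *\<^sub>v ew e 1" .
    have HX0: "HX *\<^sub>v e0' = 0\<^sub>v rX"
    proof (rule eq_vecI)
      fix i assume "i < dim_vec (0\<^sub>v rX :: bit vec)" then have i: "i < rX" by simp
      show "(HX *\<^sub>v e0') $ i = 0\<^sub>v rX $ i" unfolding HXe using i h0[OF i] HX T by simp
    qed (use HX in simp)
    have JX0: "JXC *\<^sub>v e0' = JX_MM dR JXC HG S \<gamma> *\<^sub>v e"
    proof (rule eq_vecI)
      show "dim_vec (JXC *\<^sub>v e0') = dim_vec (JX_MM dR JXC HG S \<gamma> *\<^sub>v e)" using JXC by (simp add: JXd_eq[OF JXC] place_def)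
      fix r assume "r < dim_vec (JX_MM dR JXC HG S \<gamma> *\<^sub>v e)"
      then have r: "r < kq" using JXC by (simp add: JXd_eq[OF JXC] place_def)
      have "JXC *\<^sub>v e0' = JXC *\<^sub>v e0 e + JXC *\<^sub>v (transpose_mat S *\<^sub>v P j0)"
        unfolding e0'_def using JXC S Pc by (intro mult_add_distrib_mat_vec) auto
      also have "JXC *\<^sub>v (transpose_mat S *\<^sub>v P j0) = \<gamma> *\<^sub>v ew e 1" using SP[OF JXC Pc] gHG[OF Pc] HGPj by simp
      finally have L: "(JXC *\<^sub>v e0') $ r = (JXC *\<^sub>v e0 e) $ r + (\<gamma> *\<^sub>v ew e 1) $ r" using r JXC g by simp
      have "(\<Sum>j\<in>{1..<dR}. ((JXC * transpose_mat S) *\<^sub>v eu e j) $ r) = ((JXC * transpose_mat S) *\<^sub>v P dR) $ r"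
        unfolding P_def using JXC S r by (intro mv_sumvec[symmetric]) auto
      also have "\<dots> = (\<gamma> *\<^sub>v (ew e 1 + ew e dR)) $ r" using gHG[OF Pc] HGP[of dR] dR by simp
      also have "\<dots> = (\<gamma> *\<^sub>v ew e 1) $ r + (\<gamma> *\<^sub>v ew e dR) $ r"
        using g r by (simp add: mult_add_distrib_mat_vec[OF g])
      finally have "(JX_MM dR JXC HG S \<gamma> *\<^sub>v e) $ r = (JXC *\<^sub>v e0 e) $ r + ((\<gamma> *\<^sub>v ew e 1) $ r + (\<gamma> *\<^sub>v ew e dR) $ r) + (\<gamma> *\<^sub>v ew e dR) $ r"
        using JXd_row[OF JXC g eN r] by simp
      also have "\<dots> = (JXC *\<^sub>v e0 e) $ r + (\<gamma> *\<^sub>v ew e 1) $ r" by (simp only: add.assoc bit_add_self add_0_right)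
      finally show "(JXC *\<^sub>v e0') $ r = (JX_MM dR JXC HG S \<gamma> *\<^sub>v e) $ r" using L by simp
    qed
    have w1: "wt e0' \<le> wt (e0 e) + wt (transpose_mat S *\<^sub>v P j0)" unfolding e0'_def using S by (intro wt_add_le) simp
    have w2: "real (wt (transpose_mat S *\<^sub>v P j0)) \<le> mat_norm S * real (wt (P j0))" by (rule mat_norm_bound[OF S Pc])
    have "wt (P j0) \<le> (\<Sum>j\<in>{1..<j0}. wt (eu e j))" unfolding P_def by (rule wt_sumvec) auto
    also have "\<dots> \<le> (\<Sum>j\<in>{1..<dR}. wt (eu e j))" using j0 by (intro sum_mono2) auto
    finally have w3: "wt (P j0) \<le> (\<Sum>j\<in>{1..<dR}. wt (eu e j))" .
    have w4: "wt (e0 e) + (\<Sum>j\<in>{1..<dR}. wt (eu e j)) \<le> wt e" by (rule wt_split_u[OF eN N_ge U_fit])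
    define \<Sigma> where "\<Sigma> = (\<Sum>j\<in>{1..<dR}. wt (eu e j))"
    have w1': "real (wt e0') \<le> real (wt (e0 e)) + real (wt (transpose_mat S *\<^sub>v P j0))" using w1 by linarith
    have a1: "1 * real (wt (e0 e)) \<le> mat_norm S * real (wt (e0 e))" by (rule mult_right_mono[OF ns]) simp
    have w3': "real (wt (P j0)) \<le> real \<Sigma>" using w3 unfolding \<Sigma>_def of_nat_le_iff .
    have a2: "mat_norm S * real (wt (P j0)) \<le> mat_norm S * real \<Sigma>"
      by (rule mult_left_mono[OF w3']) (use ns in simp)
    have w4': "real (wt (e0 e) + \<Sigma>) \<le> real (wt e)" using w4 unfolding \<Sigma>_def of_nat_le_iff .
    have a3: "mat_norm S * real (wt (e0 e) + \<Sigma>) \<le> mat_norm S * real (wt e)"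
      by (rule mult_left_mono[OF w4']) (use ns in simp)
    have a4: "mat_norm S * real (wt (e0 e) + \<Sigma>) = mat_norm S * real (wt (e0 e)) + mat_norm S * real \<Sigma>"
      by (simp add: distrib_left)
    have "real (wt e0') \<le> mat_norm S * real (wt e)" using w1' w2 a1 a2 a3 a4 by linarith
    with e0'c HX0 JX0 show ?thesis by blast
  next
    case False
    then have "\<And>j. j \<in> {1..<dR + 1} \<Longrightarrow> 1 \<le> wt (ew e j)" by (intro wt_pos[of _ rG]) auto
    then have "(\<Sum>j\<in>{1..<dR + 1}. 1) \<le> (\<Sum>j\<in>{1..<dR + 1}. wt (ew e j))" by (intro sum_mono) auto
    also have "\<dots> \<le> wt e" by (rule wt_split_w[OF eN])
    finally show ?thesis by simp
  qed
qed

lemma distX_MB: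
  assumes JX': "JX' \<in> carrier_mat k n"
    and compat: "HX * transpose_mat S = T * HG"
    and e: "e \<in> ker (HX_MB dR HX HG T)" and ns: "1 \<le> mat_norm S"
  shows "\<exists>e0'. e0' \<in> carrier_vec n \<and> HX *\<^sub>v e0' = 0\<^sub>v rX \<and> JX' *\<^sub>v e0' = JX_MB dR JX' HG S *\<^sub>v e
     \<and> real (wt e0') \<le> mat_norm S * real (wt e)"
proof -
  have eN: "e \<in> carrier_vec NB" using ker_carrier[OF e] by (simp add: HXBd_eq place_def)
  have dimHXd: "dim_row (HX_MB dR HX HG T) = rX + (dR - 1) * rG" by (simp add: HXBd_eq place_def)
  have h0: "(HX *\<^sub>v e0 e) $ i + (T *\<^sub>v ew e 1) $ i = 0" if i: "i < rX" for i
  proof -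
    have "(HX_MB dR HX HG T *\<^sub>v e) $ i = 0" using ker_zero[OF e] i dimHXd by simp
    then show ?thesis using HXBd_row0[OF eN i] by simp
  qed
  define w' where "w' j i = (if j < dR then ew e j $ i else 0)" for j i
  have hj: "(HG *\<^sub>v eu e j) $ i = w' j i + w' (Suc j) i" if j: "1 \<le> j" "j < dR" and i: "i < rG" for j i
  proof -
    have "j \<le> dR - 1" using j by simp
    then have "rX + (j - 1) * rG + i < rX + (dR - 1) * rG" using j i mult_pred_le[of j "dR - 1" rG] by linarith
    then have "(HX_MB dR HX HG T *\<^sub>v e) $ (rX + (j - 1) * rG + i) = 0" using ker_zero[OF e] dimHXd by simp
    then have eq: "(HG *\<^sub>v eu e j) $ i + ew e j $ i + (if j \<le> dR - 2 then ew e (j + 1) $ i else 0) = 0"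
      using HXBd_rowj[OF eN j i] by simp
    have e1: "(if j \<le> dR - 2 then ew e (j + 1) $ i else 0) = w' (Suc j) i" using j by (simp add: w'_def, arith)
    have e2: "ew e j $ i = w' j i" using j by (simp add: w'_def)
    show ?thesis using bit_eq3[OF eq[unfolded e1 e2]] .
  qed
  define P where "P = vec nG (\<lambda>t. \<Sum>j\<in>{1..<dR}. eu e j $ t)"
  have Pc: "P \<in> carrier_vec nG" by (simp add: P_def)
  have HGP: "HG *\<^sub>v P = ew e 1"
  proof (rule eq_vecI)
    fix i assume "i < dim_vec (ew e 1)" then have i: "i < rG" by simp
    have "(HG *\<^sub>v P) $ i = (\<Sum>j\<in>{1..<dR}. (HG *\<^sub>v eu e j) $ i)" unfolding P_def using HG i by (intro mv_sumvec) auto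
    also have "\<dots> = (\<Sum>j\<in>{1..<dR}. w' j i + w' (Suc j) i)" using hj i by (intro sum.cong refl) auto
    also have "\<dots> = w' 1 i + w' dR i" by (rule telescope_bit) (use dR in simp)
    also have "\<dots> = ew e 1 $ i" using dR by (simp add: w'_def)
    finally show "(HG *\<^sub>v P) $ i = ew e 1 $ i" .
  qed (use HG in simp)
  have SP: "A *\<^sub>v (transpose_mat S *\<^sub>v v) = (A * transpose_mat S) *\<^sub>v v" if "A \<in> carrier_mat a n" "v \<in> carrier_vec nG" for A a v
    using that S by (simp add: assoc_mult_mat_vec)
  define e0' where "e0' = e0 e + transpose_mat S *\<^sub>v P"
  have e0'c: "e0' \<in> carrier_vec n" unfolding e0'_def
    by (rule add_carrier_vec) (simp, rule mult_mat_vec_carrier[OF _ Pc], use S in simp)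
  have "HX *\<^sub>v e0' = HX *\<^sub>v e0 e + HX *\<^sub>v (transpose_mat S *\<^sub>v P)"
    unfolding e0'_def using HX S Pc by (intro mult_add_distrib_mat_vec) auto
  also have "HX *\<^sub>v (transpose_mat S *\<^sub>v P) = (T * HG) *\<^sub>v P" using SP[OF HX Pc] compat by simp
  also have "\<dots> = T *\<^sub>v ew e 1" using T HG Pc HGP by (simp add: assoc_mult_mat_vec)
  finally have HXe: "HX *\<^sub>v e0' = HX *\<^sub>v e0 e + T *\<^sub>v ew e 1" .
  have HX0: "HX *\<^sub>v e0' = 0\<^sub>v rX"
  proof (rule eq_vecI)
    fix i assume "i < dim_vec (0\<^sub>v rX :: bit vec)" then have i: "i < rX" by simp
    show "(HX *\<^sub>v e0') $ i = 0\<^sub>v rX $ i" unfolding HXe using i h0[OF i] HX T by simp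
  qed (use HX in simp)
  have JX0: "JX' *\<^sub>v e0' = JX_MB dR JX' HG S *\<^sub>v e"
  proof (rule eq_vecI)
    show "dim_vec (JX' *\<^sub>v e0') = dim_vec (JX_MB dR JX' HG S *\<^sub>v e)" using JX' by (simp add: JXBd_eq[OF JX'] place_def)
    fix r assume "r < dim_vec (JX_MB dR JX' HG S *\<^sub>v e)"
    then have r: "r < k" using JX' by (simp add: JXBd_eq[OF JX'] place_def)
    have "JX' *\<^sub>v e0' = JX' *\<^sub>v e0 e + JX' *\<^sub>v (transpose_mat S *\<^sub>v P)"
      unfolding e0'_def using JX' S Pc by (intro mult_add_distrib_mat_vec) auto
    also have "JX' *\<^sub>v (transpose_mat S *\<^sub>v P) = (JX' * transpose_mat S) *\<^sub>v P" using SP[OF JX' Pc] .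
    finally have L: "(JX' *\<^sub>v e0') $ r = (JX' *\<^sub>v e0 e) $ r + ((JX' * transpose_mat S) *\<^sub>v P) $ r" using r JX' S by simp
    have "(\<Sum>j\<in>{1..<dR}. ((JX' * transpose_mat S) *\<^sub>v eu e j) $ r) = ((JX' * transpose_mat S) *\<^sub>v P) $ r"
      unfolding P_def using JX' S r by (intro mv_sumvec[symmetric]) auto
    then show "(JX' *\<^sub>v e0') $ r = (JX_MB dR JX' HG S *\<^sub>v e) $ r" using L JXBd_row[OF JX' eN r] by simp
  qed
  have w1: "wt e0' \<le> wt (e0 e) + wt (transpose_mat S *\<^sub>v P)" unfolding e0'_def using S by (intro wt_add_le) simp
  have w2: "real (wt (transpose_mat S *\<^sub>v P)) \<le> mat_norm S * real (wt P)" by (rule mat_norm_bound[OF S Pc])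
  define \<Sigma> where "\<Sigma> = (\<Sum>j\<in>{1..<dR}. wt (eu e j))"
  have w3: "wt P \<le> \<Sigma>" unfolding P_def \<Sigma>_def by (rule wt_sumvec) auto
  have w4: "wt (e0 e) + \<Sigma> \<le> wt e" unfolding \<Sigma>_def by (rule wt_split_u[OF eN NB_ge U_fitB])
  have w1': "real (wt e0') \<le> real (wt (e0 e)) + real (wt (transpose_mat S *\<^sub>v P))" using w1 by linarith
  have a1: "1 * real (wt (e0 e)) \<le> mat_norm S * real (wt (e0 e))" by (rule mult_right_mono[OF ns]) simp
  have w3': "real (wt P) \<le> real \<Sigma>" using w3 unfolding of_nat_le_iff .
  have a2: "mat_norm S * real (wt P) \<le> mat_norm S * real \<Sigma>"
    by (rule mult_left_mono[OF w3']) (use ns in simp)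
  have w4': "real (wt (e0 e) + \<Sigma>) \<le> real (wt e)" using w4 unfolding of_nat_le_iff .
  have a3: "mat_norm S * real (wt (e0 e) + \<Sigma>) \<le> mat_norm S * real (wt e)"
    by (rule mult_left_mono[OF w4']) (use ns in simp)
  have a4: "mat_norm S * real (wt (e0 e) + \<Sigma>) = mat_norm S * real (wt (e0 e)) + mat_norm S * real \<Sigma>"
    by (simp add: distrib_left)
  have "real (wt e0') \<le> mat_norm S * real (wt e)" using w1' w2 a1 a2 a3 a4 by linarith
  with e0'c HX0 JX0 show ?thesis by blast
qed

end


lemma ereal_L1: assumes D: "D \<le> enat w0" and w: "real w0 \<le> ns * real w" and ns: "1 \<le> ns"
  shows "ereal_of_enat D / ereal ns \<le> ereal (real w)"
proof -
  obtain dd where dd: "D = enat dd" using D by (cases D) auto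
  have "dd \<le> w0" using D dd by simp
  then have "real dd \<le> ns * real w" using w by linarith
  then have "real dd / ns \<le> real w" using ns by (simp add: divide_le_eq mult.commute)
  moreover have "ereal_of_enat D / ereal ns = ereal (real dd / ns)" using dd ns by (simp add: ereal_divide)
  ultimately show ?thesis by simp
qed

lemma ereal_L2: assumes D: "D \<le> enat w" and ns: "1 \<le> ns"
  shows "ereal_of_enat D / ereal ns \<le> ereal (real w)"
proof (rule ereal_L1[OF D _ ns])
  show "real w \<le> ns * real w" using ns mult_right_mono[OF ns, of "real w"] by simp
qed

lemma ereal_L3: "x \<le> ereal_of_enat a \<Longrightarrow> x \<le> ereal_of_enat b \<Longrightarrow> x \<le> ereal_of_enat (min a b)"
  by (cases "a \<le> b") (simp_all add: min_def)

lemma ext0_add: "dim_vec x = n \<Longrightarrow> dim_vec y = n \<Longrightarrow> ext0 N (x + y) = ext0 N x + ext0 N y"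
  by (intro eq_vecI) (auto simp: ext0_def)

lemma ext0_carrier: "ext0 N x \<in> carrier_vec N" by (simp add: ext0_def)

lemma rs_mem: "c \<in> carrier_vec (dim_row A) \<Longrightarrow> transpose_mat A *\<^sub>v c \<in> rs A"
  unfolding rs_def by blast

lemma restr_rs:
  assumes HX: "HX \<in> carrier_mat rX n" and R: "dim_row H = R" and rR: "rX \<le> R"
    and res: "\<And>c. c \<in> carrier_vec R \<Longrightarrow> restr n (transpose_mat H *\<^sub>v c) = transpose_mat HX *\<^sub>v sv 0 rX c"
  shows "{restr n h | h. h \<in> rs H} = rs HX"
proof
  show "{restr n h | h. h \<in> rs H} \<subseteq> rs HX"
  proof
    fix y assume "y \<in> {restr n h | h. h \<in> rs H}"
    then obtain c where c: "c \<in> carrier_vec R" "y = restr n (transpose_mat H *\<^sub>v c)" using R unfolding rs_def by auto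
    then have "y = transpose_mat HX *\<^sub>v sv 0 rX c" using res by simp
    then show "y \<in> rs HX" using HX by (auto intro!: rs_mem[of _ HX])
  qed
  show "rs HX \<subseteq> {restr n h | h. h \<in> rs H}"
  proof
    fix y assume "y \<in> rs HX"
    then obtain a where a: "a \<in> carrier_vec rX" "y = transpose_mat HX *\<^sub>v a" using HX unfolding rs_def by auto
    define c where "c = vec R (\<lambda>t. if t < rX then a $ t else 0)"
    have cc: "c \<in> carrier_vec R" by (simp add: c_def)
    have "sv 0 rX c = a" using a rR by (intro eq_vecI) (auto simp: c_def)
    then have "restr n (transpose_mat H *\<^sub>v c) = y" using res[OF cc] a by simp
    moreover have "transpose_mat H *\<^sub>v c \<in> rs H" using cc R by (intro rs_mem) simp
    ultimately show "y \<in> {restr n h | h. h \<in> rs H}" by blast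
  qed
qed

locale thm_ctx = code_dims +
  fixes JX JZ Jbar Jinv JZA JZC JXA JXC :: "bit mat" and q k :: nat
  assumes JX: "JX \<in> carrier_mat k n" and JZ: "JZ \<in> carrier_mat k n"
    and JXJZ: "JX * transpose_mat JZ = 1\<^sub>m k"
    and q: "q \<le> k"
    and JZA: "JZA \<in> carrier_mat q n" and JZC: "JZC \<in> carrier_mat (k - q) n"
    and Jbar: "Jbar \<in> carrier_mat k k" and Jinv: "Jinv \<in> carrier_mat k k"
    and Jbar_inv: "Jbar * Jinv = 1\<^sub>m k" "Jinv * Jbar = 1\<^sub>m k"
    and JZ': "JZA @\<^sub>r JZC = Jbar * JZ"
    and JXA: "JXA \<in> carrier_mat q n" and JXC: "JXC \<in> carrier_mat (k - q) n"
    and JX': "JXA @\<^sub>r JXC = transpose_mat Jinv * JX"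
    and Snz: "S \<noteq> 0\<^sub>m nG n"
    and compat: "HX * transpose_mat S = T * HG"
begin

abbreviation "JXp \<equiv> JXA @\<^sub>r JXC"
abbreviation "JZp \<equiv> JZA @\<^sub>r JZC"

lemma JXp_c: "JXp \<in> carrier_mat k n" using carrier_append_rows[OF JXA JXC] q by simp
lemma JZp_c: "JZp \<in> carrier_mat k n" using carrier_append_rows[OF JZA JZC] q by simp
lemma ns: "1 \<le> mat_norm S" by (rule mat_norm_ge1[OF S Snz])

lemma JX_eq: "JX = transpose_mat Jbar * JXp"
proof -
  have "transpose_mat Jbar * JXp = transpose_mat Jbar * (transpose_mat Jinv * JX)" unfolding JX' ..
  also have "\<dots> = (transpose_mat Jbar * transpose_mat Jinv) * JX" using Jbar Jinv JX by (simp add: assoc_mult_mat)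
  also have "transpose_mat Jbar * transpose_mat Jinv = transpose_mat (Jinv * Jbar)" using Jbar Jinv by (simp add: transpose_mult)
  also have "\<dots> = 1\<^sub>m k" using Jbar_inv by simp
  finally show ?thesis using JX by simp
qed

lemma JZ_eq: "JZ = Jinv * JZp"
proof -
  have "Jinv * JZp = Jinv * (Jbar * JZ)" unfolding JZ' ..
  also have "\<dots> = (Jinv * Jbar) * JZ" using Jbar Jinv JZ by (simp add: assoc_mult_mat)
  finally show ?thesis using Jbar_inv JZ by simp
qed

lemma ZX: "JZp * transpose_mat JXp = 1\<^sub>m k"
proof -
  have "transpose_mat JXp = transpose_mat JX * Jinv" unfolding JX' using Jinv JX by (simp add: transpose_mult)
  then have "JZp * transpose_mat JXp = (Jbar * JZ) * (transpose_mat JX * Jinv)" unfolding JZ' by simp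
  also have "\<dots> = Jbar * (JZ * (transpose_mat JX * Jinv))"
    by (rule assoc_mult_mat[OF Jbar JZ, of _ k]) (use JX Jinv in simp)
  also have "JZ * (transpose_mat JX * Jinv) = (JZ * transpose_mat JX) * Jinv"
    by (rule assoc_mult_mat[symmetric, OF JZ _ Jinv]) (use JX in simp)
  also have "JZ * transpose_mat JX = transpose_mat (JX * transpose_mat JZ)" using JX JZ by (simp add: transpose_mult)
  also have "\<dots> = 1\<^sub>m k" using JXJZ by simp
  finally show ?thesis using Jbar Jinv Jbar_inv by simp
qed

lemma rsJX: assumes "x \<in> rs JX" obtains c' where "c' \<in> carrier_vec k" "x = transpose_mat JXp *\<^sub>v c'"
proof -
  obtain c where c: "c \<in> carrier_vec k" "x = transpose_mat JX *\<^sub>v c" using assms JX unfolding rs_def by auto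
  have "transpose_mat JX = transpose_mat JXp * Jbar" unfolding JX_eq using Jbar JXp_c by (simp add: transpose_mult)
  then have "x = transpose_mat JXp *\<^sub>v (Jbar *\<^sub>v c)" using c Jbar JXp_c by (simp add: assoc_mult_mat_vec)
  moreover have "Jbar *\<^sub>v c \<in> carrier_vec k" by (rule mult_mat_vec_carrier[OF Jbar c(1)])
  ultimately show thesis using that by blast
qed

lemma rsJZ: assumes "z \<in> rs JZ" obtains c' where "c' \<in> carrier_vec k" "z = transpose_mat JZp *\<^sub>v c'"
proof -
  obtain c where c: "c \<in> carrier_vec k" "z = transpose_mat JZ *\<^sub>v c" using assms JZ unfolding rs_def by auto
  have "transpose_mat JZ = transpose_mat JZp * transpose_mat Jinv" unfolding JZ_eq using Jinv JZp_c by (simp add: transpose_mult)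
  then have "z = transpose_mat JZp *\<^sub>v (transpose_mat Jinv *\<^sub>v c)" using c Jinv JZp_c by (simp add: assoc_mult_mat_vec)
  moreover have "transpose_mat Jinv *\<^sub>v c \<in> carrier_vec k" by (rule mult_mat_vec_carrier[OF _ c(1)]) (use Jinv in simp)
  ultimately show thesis using that by blast
qed

lemma JX_nz: assumes e: "e \<in> carrier_vec n" and nz: "JXp *\<^sub>v e \<noteq> 0\<^sub>v k" shows "JX *\<^sub>v e \<noteq> 0\<^sub>v k"
proof
  assume "JX *\<^sub>v e = 0\<^sub>v k"
  then have "JXp *\<^sub>v e = transpose_mat Jinv *\<^sub>v 0\<^sub>v k" unfolding JX' using Jinv JX e by (simp add: assoc_mult_mat_vec)
  also have "\<dots> = 0\<^sub>v k" using Jinv by (intro mv_zero) simp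
  finally show False using nz by simp
qed

lemma JZ_nz: assumes e: "e \<in> carrier_vec n" and nz: "JZp *\<^sub>v e \<noteq> 0\<^sub>v k" shows "JZ *\<^sub>v e \<noteq> 0\<^sub>v k"
proof
  assume "JZ *\<^sub>v e = 0\<^sub>v k"
  then have "JZp *\<^sub>v e = Jbar *\<^sub>v 0\<^sub>v k" unfolding JZ' using Jbar JZ e by (simp add: assoc_mult_mat_vec)
  also have "\<dots> = 0\<^sub>v k" using Jbar by (intro mv_zero) simp
  finally show False using nz by simp
qed

lemma JXC_nz: assumes e: "e \<in> carrier_vec n" and nz: "JXC *\<^sub>v e \<noteq> 0\<^sub>v (k - q)" shows "JX *\<^sub>v e \<noteq> 0\<^sub>v k"
proof (rule JX_nz[OF e])
  obtain r where r: "r < k - q" "(JXC *\<^sub>v e) $ r \<noteq> 0"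
    using nz JXC by (metis carrier_matD(1) dim_mult_mat_vec eq_vecI index_zero_vec(1,2))
  have "(JXp *\<^sub>v e) $ (q + r) = (JXC *\<^sub>v e) $ r" by (rule append_rows_mult_index2[OF JXA JXC e r(1)])
  then show "JXp *\<^sub>v e \<noteq> 0\<^sub>v k" using r q by auto
qed

lemma JZC_nz: assumes e: "e \<in> carrier_vec n" and nz: "JZC *\<^sub>v e \<noteq> 0\<^sub>v (k - q)" shows "JZ *\<^sub>v e \<noteq> 0\<^sub>v k"
proof (rule JZ_nz[OF e])
  obtain r where r: "r < k - q" "(JZC *\<^sub>v e) $ r \<noteq> 0"
    using nz JZC by (metis carrier_matD(1) dim_mult_mat_vec eq_vecI index_zero_vec(1,2))
  have "(JZp *\<^sub>v e) $ (q + r) = (JZC *\<^sub>v e) $ r" by (rule append_rows_mult_index2[OF JZA JZC e r(1)])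
  then show "JZp *\<^sub>v e \<noteq> 0\<^sub>v k" using r q by auto
qed

lemma dimHXd: "dim_row (HX_MM dR HX HG T) = rX + (dR - 1) * rG" by (simp add: HXd_eq place_def)
lemma dimHZd: "dim_row (HZ_MM dR HZ HG S) = rZ + dR * nG" by (simp add: HZd_eq place_def)
lemma dimHXBd: "dim_row (HX_MB dR HX HG T) = rX + (dR - 1) * rG" by (simp add: HXBd_eq place_def)
lemma dimHZBd: "dim_row (HZ_MB dR HZ HG S) = rZ + (dR - 1) * nG" by (simp add: HZBd_eq place_def)

lemma A1: "{restr n h | h. h \<in> rs (HX_MM dR HX HG T)} = rs HX"
  by (rule restr_rs[OF HX dimHXd _ HXd_restr]) simp_all

lemma B1: "{restr n h | h. h \<in> rs (HX_MB dR HX HG T)} = rs HX"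
  by (rule restr_rs[OF HX dimHXBd _ HXBd_restr]) simp_all

lemma A2: "h \<in> rs HZ \<Longrightarrow> ext0 N h \<in> rs (HZ_MM dR HZ HG S)"
proof -
  assume "h \<in> rs HZ"
  then obtain a where a: "a \<in> carrier_vec rZ" "h = transpose_mat HZ *\<^sub>v a" using HZ unfolding rs_def by auto
  have "ext0 N h = transpose_mat (HZ_MM dR HZ HG S) *\<^sub>v vec (rZ + dR * nG) (\<lambda>t. if t < rZ then a $ t else 0)"
    using HZd_ext[OF a(1)] a(2) by simp
  also have "\<dots> \<in> rs (HZ_MM dR HZ HG S)" by (rule rs_mem) (simp add: dimHZd)
  finally show ?thesis .
qed

lemma B2: "h \<in> rs HZ \<Longrightarrow> ext0 NB h \<in> rs (HZ_MB dR HZ HG S)"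
proof -
  assume "h \<in> rs HZ"
  then obtain a where a: "a \<in> carrier_vec rZ" "h = transpose_mat HZ *\<^sub>v a" using HZ unfolding rs_def by auto
  have "ext0 NB h = transpose_mat (HZ_MB dR HZ HG S) *\<^sub>v vec (rZ + (dR - 1) * nG) (\<lambda>t. if t < rZ then a $ t else 0)"
    using HZBd_ext[OF a(1)] a(2) by simp
  also have "\<dots> \<in> rs (HZ_MB dR HZ HG S)" by (rule rs_mem) (simp add: dimHZBd)
  finally show ?thesis .
qed

lemma sub_from: assumes UU: "UU \<in> carrier_mat m n" shows "rs JZA \<subseteq> rs (JZA @\<^sub>r UU)"
proof
  fix z assume "z \<in> rs JZA"
  then obtain a where a: "a \<in> carrier_vec q" "z = transpose_mat JZA *\<^sub>v a" using JZA unfolding rs_def by auto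
  define c where "c = a @\<^sub>v 0\<^sub>v m"
  have cc: "c \<in> carrier_vec (q + m)" using a by (simp add: c_def)
  have s1: "sv 0 q c = a" using a by (intro eq_vecI) (auto simp: c_def)
  have s2: "sv q m c = 0\<^sub>v m" using a by (intro eq_vecI) (auto simp: c_def)
  have "transpose_mat (JZA @\<^sub>r UU) *\<^sub>v c = transpose_mat JZA *\<^sub>v a + transpose_mat UU *\<^sub>v 0\<^sub>v m"
    using tmult_append_rows[OF JZA UU cc] s1 s2 by simp
  also have "transpose_mat UU *\<^sub>v 0\<^sub>v m = 0\<^sub>v n" using UU by (intro mv_zero) simp
  also have "transpose_mat JZA *\<^sub>v a + 0\<^sub>v n = z" using a JZA by simp
  finally have "z = transpose_mat (JZA @\<^sub>r UU) *\<^sub>v c" by simp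
  moreover have "c \<in> carrier_vec (dim_row (JZA @\<^sub>r UU))" using cc carrier_append_rows[OF JZA UU] by simp
  ultimately show "z \<in> rs (JZA @\<^sub>r UU)" using rs_mem by blast
qed

lemma mult_S: assumes sub: "rs JZA \<subseteq> set_mult (ker HG) S" and z: "z \<in> rs JZA"
  obtains v where "v \<in> carrier_vec nG" "HG *\<^sub>v v = 0\<^sub>v rG" "z = transpose_mat S *\<^sub>v v"
proof -
  from sub z have "z \<in> set_mult (ker HG) S" by blast
  then obtain v where "v \<in> ker HG" "z = transpose_mat S *\<^sub>v v" unfolding set_mult_def by blast
  then show thesis using that[of v] HG by (auto simp: ker_def)
qed

lemma A5: assumes sub: "rs JZA \<subseteq> set_mult (ker HG) S" and z: "z \<in> rs JZA"
  shows "ext0 N z \<in> rs (HZ_MM dR HZ HG S)"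
proof -
  obtain v where v: "v \<in> carrier_vec nG" "HG *\<^sub>v v = 0\<^sub>v rG" "z = transpose_mat S *\<^sub>v v"
    using sub z by (rule mult_S)
  have "ext0 N z = transpose_mat (HZ_MM dR HZ HG S) *\<^sub>v vec (rZ + dR * nG) (\<lambda>t. if t < rZ then 0 else v $ ((t - rZ) mod nG))"
    using HZd_tele[OF v(1,2)] v(3) by simp
  also have "\<dots> \<in> rs (HZ_MM dR HZ HG S)" by (rule rs_mem) (simp add: dimHZd)
  finally show ?thesis .
qed

lemma B5: assumes sub: "rs JZA \<subseteq> set_mult (ker HG) S" and z: "z \<in> rs JZA"
  shows "\<exists>g \<in> rs (HZ_MB dR HZ HG S). \<forall>i < NB. \<not> (U (dR - 1) \<le> i \<and> i < U (dR - 1) + nG) \<longrightarrow> (ext0 NB z + g) $ i = 0"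
proof -
  obtain v where v: "v \<in> carrier_vec nG" "HG *\<^sub>v v = 0\<^sub>v rG" "z = transpose_mat S *\<^sub>v v"
    using sub z by (rule mult_S)
  let ?g = "transpose_mat (HZ_MB dR HZ HG S) *\<^sub>v vec (rZ + (dR - 1) * nG) (\<lambda>t. if t < rZ then 0 else v $ ((t - rZ) mod nG))"
  have "?g \<in> rs (HZ_MB dR HZ HG S)" by (rule rs_mem) (simp add: dimHZBd)
  moreover have "(ext0 NB z + ?g) $ i = 0" if i: "i < NB" "\<not> (U (dR - 1) \<le> i \<and> i < U (dR - 1) + nG)" for i
  proof -
    have d: "dim_vec ?g = NB" by (simp add: HZBd_eq place_def)
    have "(ext0 NB z + ?g) $ i = ext0 NB z $ i + ?g $ i" using i d by (simp add: ext0_def)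
    also have "?g $ i = ext0 NB z $ i" using HZBd_tele[OF v(1,2) i] v(3) by simp
    finally show ?thesis by simp
  qed
  ultimately show ?thesis by blast
qed

lemma B3: assumes x: "x \<in> rs JX" shows "\<exists>x' \<in> rs (JX_MB dR JXp HG S). restr n x' = x"
proof -
  obtain c' where c': "c' \<in> carrier_vec k" "x = transpose_mat JXp *\<^sub>v c'" using x by (rule rsJX)
  have "restr n (transpose_mat (JX_MB dR JXp HG S) *\<^sub>v c') = x" using JXBd_restr[OF JXp_c c'(1)] c'(2) by simp
  moreover have "transpose_mat (JX_MB dR JXp HG S) *\<^sub>v c' \<in> rs (JX_MB dR JXp HG S)"
    by (rule rs_mem) (use c' JXp_c in \<open>simp add: JXBd_eq place_def\<close>)
  ultimately show ?thesis by blast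
qed

lemma B4: assumes z: "z \<in> rs JZ" shows "ext0 NB z \<in> rs (JZ_MB dR JZp HG)"
proof -
  obtain c' where c': "c' \<in> carrier_vec k" "z = transpose_mat JZp *\<^sub>v c'" using z by (rule rsJZ)
  have "ext0 NB z = transpose_mat (JZ_MB dR JZp HG) *\<^sub>v c'" using JZBd_ext[OF JZp_c c'(1)] c'(2) by simp
  also have "\<dots> \<in> rs (JZ_MB dR JZp HG)" by (rule rs_mem) (use c' JZp_c in \<open>simp add: JZBd_eq place_def\<close>)
  finally show ?thesis .
qed

lemma A3: assumes g: "\<gamma> \<in> carrier_mat (k - q) rG" and x: "x \<in> rs JX" and x0: "JZA *\<^sub>v x = 0\<^sub>v q"
  shows "\<exists>x' \<in> rs (JX_MM dR JXC HG S \<gamma>). restr n x' = x"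
proof -
  obtain c' where c': "c' \<in> carrier_vec k" "x = transpose_mat JXp *\<^sub>v c'" using x by (rule rsJX)
  have xn: "x \<in> carrier_vec n" using c' JXp_c by simp
  have ci: "c' $ i = 0" if i: "i < q" for i
  proof -
    have "(JZA *\<^sub>v x) $ i = (JZp *\<^sub>v x) $ i" using append_rows_mult_index1[OF JZA JZC xn i] by simp
    also have "JZp *\<^sub>v x = (JZp * transpose_mat JXp) *\<^sub>v c'" using c' JZp_c JXp_c by (simp add: assoc_mult_mat_vec)
    also have "\<dots> = c'" using ZX c' by simp
    finally show ?thesis using x0 i by simp
  qed
  have kk: "c' \<in> carrier_vec (q + (k - q))" using c' q by simp
  have s1: "sv 0 q c' = 0\<^sub>v q" using ci by (intro eq_vecI) auto
  define b where "b = sv q (k - q) c'"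
  have bc: "b \<in> carrier_vec (k - q)" by (simp add: b_def)
  have "x = transpose_mat JXA *\<^sub>v 0\<^sub>v q + transpose_mat JXC *\<^sub>v b"
    using tmult_append_rows[OF JXA JXC kk] c'(2) s1 by (simp add: b_def)
  also have "transpose_mat JXA *\<^sub>v 0\<^sub>v q = 0\<^sub>v n" using JXA by (intro mv_zero) simp
  finally have xb: "x = transpose_mat JXC *\<^sub>v b" using JXC bc by simp
  have "restr n (transpose_mat (JX_MM dR JXC HG S \<gamma>) *\<^sub>v b) = x" using JXd_restr[OF JXC g bc] xb by simp
  moreover have "transpose_mat (JX_MM dR JXC HG S \<gamma>) *\<^sub>v b \<in> rs (JX_MM dR JXC HG S \<gamma>)"
    by (rule rs_mem) (use bc JXC in \<open>simp add: JXd_eq[OF JXC] place_def\<close>)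
  ultimately show ?thesis by blast
qed

lemma A4: assumes sub: "rs JZA \<subseteq> set_mult (ker HG) S" and z: "z \<in> rs JZ"
  shows "ext0 N z \<in> set_plus (rs (JZ_MM dR JZC HG)) (rs (HZ_MM dR HZ HG S))"
proof -
  obtain c' where c': "c' \<in> carrier_vec k" "z = transpose_mat JZp *\<^sub>v c'" using z by (rule rsJZ)
  have kk: "c' \<in> carrier_vec (q + (k - q))" using c' q by simp
  define a where "a = sv 0 q c'"
  define b where "b = sv q (k - q) c'"
  have zab: "z = transpose_mat JZA *\<^sub>v a + transpose_mat JZC *\<^sub>v b"
    using tmult_append_rows[OF JZA JZC kk] c'(2) by (simp add: a_def b_def)
  have ac: "a \<in> carrier_vec q" and bc: "b \<in> carrier_vec (k - q)" by (simp_all add: a_def b_def)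
  have "ext0 N z = ext0 N (transpose_mat JZA *\<^sub>v a) + ext0 N (transpose_mat JZC *\<^sub>v b)"
    unfolding zab using JZA JZC by (intro ext0_add) simp_all
  also have "\<dots> = ext0 N (transpose_mat JZC *\<^sub>v b) + ext0 N (transpose_mat JZA *\<^sub>v a)"
    by (rule comm_add_vec) (rule ext0_carrier)+
  finally have "ext0 N z = ext0 N (transpose_mat JZC *\<^sub>v b) + ext0 N (transpose_mat JZA *\<^sub>v a)" .
  moreover have "ext0 N (transpose_mat JZC *\<^sub>v b) \<in> rs (JZ_MM dR JZC HG)"
    unfolding JZd_ext[OF JZC bc, symmetric] by (rule rs_mem) (use bc JZC in \<open>simp add: JZd_eq[OF JZC] place_def\<close>)
  moreover have "ext0 N (transpose_mat JZA *\<^sub>v a) \<in> rs (HZ_MM dR HZ HG S)"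
    by (rule A5[OF sub]) (use ac JZA in \<open>auto intro: rs_mem\<close>)
  ultimately show ?thesis unfolding set_plus_def by blast
qed

lemma A6: assumes g: "\<gamma> \<in> carrier_mat (k - q) rG" and gam: "JXC * transpose_mat S = \<gamma> * HG"
  shows "min (ereal_of_enat (min (cdist HX JX) (cdist HZ JZ)) / ereal (mat_norm S)) (ereal (real dR))
     \<le> ereal_of_enat (min (cdist (HX_MM dR HX HG T) (JX_MM dR JXC HG S \<gamma>)) (cdist (HZ_MM dR HZ HG S) (JZ_MM dR JZC HG)))"
proof -
  let ?D = "min (cdist HX JX) (cdist HZ JZ)"
  let ?x = "min (ereal_of_enat ?D / ereal (mat_norm S)) (ereal (real dR))"
  have X: "?x \<le> ereal_of_enat (cdist (HX_MM dR HX HG T) (JX_MM dR JXC HG S \<gamma>))"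
  proof (rule cdist_lower)
    fix e assume e: "e \<in> ker (HX_MM dR HX HG T)" and nz: "JX_MM dR JXC HG S \<gamma> *\<^sub>v e \<noteq> 0\<^sub>v (dim_row (JX_MM dR JXC HG S \<gamma>))"
    have dJ: "dim_row (JX_MM dR JXC HG S \<gamma>) = k - q" by (simp add: JXd_eq[OF JXC] place_def)
    from distX_MM[OF JXC g gam compat e ns] show "?x \<le> ereal (real (wt e))"
    proof
      assume "\<exists>e0'. e0' \<in> carrier_vec n \<and> HX *\<^sub>v e0' = 0\<^sub>v rX \<and> JXC *\<^sub>v e0' = JX_MM dR JXC HG S \<gamma> *\<^sub>v e
        \<and> real (wt e0') \<le> mat_norm S * real (wt e)"
      then obtain e0' where e0': "e0' \<in> carrier_vec n" "HX *\<^sub>v e0' = 0\<^sub>v rX" "JXC *\<^sub>v e0' = JX_MM dR JXC HG S \<gamma> *\<^sub>v e"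
        "real (wt e0') \<le> mat_norm S * real (wt e)" by blast
      have ker: "e0' \<in> ker HX" using e0' HX by (simp add: ker_def)
      have "JXC *\<^sub>v e0' \<noteq> 0\<^sub>v (k - q)" using nz dJ e0'(3) by simp
      then have "JX *\<^sub>v e0' \<noteq> 0\<^sub>v k" by (rule JXC_nz[OF e0'(1)])
      then have "cdist HX JX \<le> enat (wt e0')" using cdist_upper[OF ker] JX by simp
      then have "?D \<le> enat (wt e0')" by (simp add: min.coboundedI1)
      then have "ereal_of_enat ?D / ereal (mat_norm S) \<le> ereal (real (wt e))" by (rule ereal_L1[OF _ e0'(4) ns])
      then show ?thesis by (simp add: min_le_iff_disj)
    next
      assume "dR \<le> wt e" then show ?thesis by (simp add: min_le_iff_disj)
    qed
  qed
  have Z: "?x \<le> ereal_of_enat (cdist (HZ_MM dR HZ HG S) (JZ_MM dR JZC HG))"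
  proof (rule cdist_lower)
    fix e assume e: "e \<in> ker (HZ_MM dR HZ HG S)" and nz: "JZ_MM dR JZC HG *\<^sub>v e \<noteq> 0\<^sub>v (dim_row (JZ_MM dR JZC HG))"
    have eN: "e \<in> carrier_vec N" using ker_carrier[OF e] by (simp add: HZd_eq place_def)
    have dJ: "dim_row (JZ_MM dR JZC HG) = k - q" by (simp add: JZd_eq[OF JZC] place_def)
    have HZ0: "HZ *\<^sub>v e0 e = 0\<^sub>v rZ"
    proof (rule eq_vecI)
      fix i assume "i < dim_vec (0\<^sub>v rZ :: bit vec)" then have i: "i < rZ" by simp
      have "(HZ_MM dR HZ HG S *\<^sub>v e) $ i = 0" using ker_zero[OF e] i by (simp add: dimHZd)
      then show "(HZ *\<^sub>v e0 e) $ i = 0\<^sub>v rZ $ i" using HZd_row0[OF eN i] i by simp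
    qed (use HZ in simp)
    have JZe: "JZC *\<^sub>v e0 e = JZ_MM dR JZC HG *\<^sub>v e"
    proof (rule eq_vecI)
      show "dim_vec (JZC *\<^sub>v e0 e) = dim_vec (JZ_MM dR JZC HG *\<^sub>v e)" using JZC dJ by simp
      fix r assume "r < dim_vec (JZ_MM dR JZC HG *\<^sub>v e)" then have r: "r < k - q" using dJ by simp
      show "(JZC *\<^sub>v e0 e) $ r = (JZ_MM dR JZC HG *\<^sub>v e) $ r" using JZd_row[OF JZC eN r] by simp
    qed
    have e0c: "e0 e \<in> carrier_vec n" by simp
    have "JZC *\<^sub>v e0 e \<noteq> 0\<^sub>v (k - q)" using nz dJ JZe by simp
    then have "JZ *\<^sub>v e0 e \<noteq> 0\<^sub>v k" by (rule JZC_nz[OF e0c])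
    moreover have ker: "e0 e \<in> ker HZ" using HZ0 HZ by (simp add: ker_def)
    ultimately have c1: "cdist HZ JZ \<le> enat (wt (e0 e))" using cdist_upper[OF ker] JZ by simp
    have "wt (e0 e) \<le> wt e" using wt_split_u[OF eN N_ge U_fit] by simp
    then have c2: "enat (wt (e0 e)) \<le> enat (wt e)" by simp
    have "?D \<le> enat (wt e)" using order_trans[OF min.cobounded2 order_trans[OF c1 c2]] .
    then have "ereal_of_enat ?D / ereal (mat_norm S) \<le> ereal (real (wt e))" by (rule ereal_L2[OF _ ns])
    then show "?x \<le> ereal (real (wt e))" by (simp add: min_le_iff_disj)
  qed
  show ?thesis by (rule ereal_L3[OF X Z])
qed

lemma B6:
  shows "ereal_of_enat (min (cdist HX JX) (cdist HZ JZ)) / ereal (mat_norm S)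
     \<le> ereal_of_enat (min (cdist (HX_MB dR HX HG T) (JX_MB dR JXp HG S)) (cdist (HZ_MB dR HZ HG S) (JZ_MB dR JZp HG)))"
proof -
  let ?D = "min (cdist HX JX) (cdist HZ JZ)"
  let ?x = "ereal_of_enat ?D / ereal (mat_norm S)"
  have X: "?x \<le> ereal_of_enat (cdist (HX_MB dR HX HG T) (JX_MB dR JXp HG S))"
  proof (rule cdist_lower)
    fix e assume e: "e \<in> ker (HX_MB dR HX HG T)" and nz: "JX_MB dR JXp HG S *\<^sub>v e \<noteq> 0\<^sub>v (dim_row (JX_MB dR JXp HG S))"
    have dJ: "dim_row (JX_MB dR JXp HG S) = k" by (simp add: JXBd_eq[OF JXp_c] place_def)
    obtain e0' where e0': "e0' \<in> carrier_vec n" "HX *\<^sub>v e0' = 0\<^sub>v rX" "JXp *\<^sub>v e0' = JX_MB dR JXp HG S *\<^sub>v e"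
        "real (wt e0') \<le> mat_norm S * real (wt e)" using distX_MB[OF JXp_c compat e ns] by blast
    have ker: "e0' \<in> ker HX" using e0' HX by (simp add: ker_def)
    have "JXp *\<^sub>v e0' \<noteq> 0\<^sub>v k" using nz dJ e0'(3) by simp
    then have "JX *\<^sub>v e0' \<noteq> 0\<^sub>v k" by (rule JX_nz[OF e0'(1)])
    then have "cdist HX JX \<le> enat (wt e0')" using cdist_upper[OF ker] JX by simp
    then have "?D \<le> enat (wt e0')" by (simp add: min.coboundedI1)
    then show "?x \<le> ereal (real (wt e))" by (rule ereal_L1[OF _ e0'(4) ns])
  qed
  have Z: "?x \<le> ereal_of_enat (cdist (HZ_MB dR HZ HG S) (JZ_MB dR JZp HG))"
  proof (rule cdist_lower)
    fix e assume e: "e \<in> ker (HZ_MB dR HZ HG S)" and nz: "JZ_MB dR JZp HG *\<^sub>v e \<noteq> 0\<^sub>v (dim_row (JZ_MB dR JZp HG))"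
    have eN: "e \<in> carrier_vec NB" using ker_carrier[OF e] by (simp add: HZBd_eq place_def)
    have dJ: "dim_row (JZ_MB dR JZp HG) = k" by (simp add: JZBd_eq[OF JZp_c] place_def)
    have HZ0: "HZ *\<^sub>v e0 e = 0\<^sub>v rZ"
    proof (rule eq_vecI)
      fix i assume "i < dim_vec (0\<^sub>v rZ :: bit vec)" then have i: "i < rZ" by simp
      have "(HZ_MB dR HZ HG S *\<^sub>v e) $ i = 0" using ker_zero[OF e] i by (simp add: dimHZBd)
      then show "(HZ *\<^sub>v e0 e) $ i = 0\<^sub>v rZ $ i" using HZBd_row0[OF eN i] i by simp
    qed (use HZ in simp)
    have JZe: "JZp *\<^sub>v e0 e = JZ_MB dR JZp HG *\<^sub>v e"
    proof (rule eq_vecI)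
      show "dim_vec (JZp *\<^sub>v e0 e) = dim_vec (JZ_MB dR JZp HG *\<^sub>v e)" using JZp_c dJ by simp
      fix r assume "r < dim_vec (JZ_MB dR JZp HG *\<^sub>v e)" then have r: "r < k" using dJ by simp
      show "(JZp *\<^sub>v e0 e) $ r = (JZ_MB dR JZp HG *\<^sub>v e) $ r" using JZBd_row[OF JZp_c eN r] by simp
    qed
    have e0c: "e0 e \<in> carrier_vec n" by simp
    have "JZp *\<^sub>v e0 e \<noteq> 0\<^sub>v k" using nz dJ JZe by simp
    then have "JZ *\<^sub>v e0 e \<noteq> 0\<^sub>v k" by (rule JZ_nz[OF e0c])
    moreover have ker: "e0 e \<in> ker HZ" using HZ0 HZ by (simp add: ker_def)
    ultimately have c1: "cdist HZ JZ \<le> enat (wt (e0 e))" using cdist_upper[OF ker] JZ by simp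
    have "wt (e0 e) \<le> wt e" using wt_split_u[OF eN NB_ge U_fitB] by simp
    then have c2: "enat (wt (e0 e)) \<le> enat (wt e)" by simp
    have "?D \<le> enat (wt e)" using order_trans[OF min.cobounded2 order_trans[OF c1 c2]] .
    then show "?x \<le> ereal (real (wt e))" by (rule ereal_L2[OF _ ns])
  qed
  show ?thesis by (rule ereal_L3[OF X Z])
qed

end



theorem theorem2:
  fixes HX HZ JX JZ FX FZ :: "bit mat"
    and Jbar Jinv JZA JZC JXA JXC :: "bit mat"
    and HG S T :: "bit mat"
    and n rX rZ k kg q nG rG dR :: nat
  assumes HX: "HX \<in> carrier_mat rX n" and HZ: "HZ \<in> carrier_mat rZ n"
    and JX: "JX \<in> carrier_mat k n" and JZ: "JZ \<in> carrier_mat k n"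
    and FX: "FX \<in> carrier_mat kg n" and FZ: "FZ \<in> carrier_mat kg n"
    and kerHX: "dsum3 (ker HX) (rs HZ) (rs JZ) (rs FZ)"
    and kerHZ: "dsum3 (ker HZ) (rs HX) (rs JX) (rs FX)"
    and JXJZ: "JX * transpose_mat JZ = 1\<^sub>m k"
    and FXFZ: "FX * transpose_mat FZ = 1\<^sub>m kg"
    \<comment> \<open>the logical operators Sigma: J_{Z,A} (rows v_1..v_q), J_{Z,C} (rows v_{q+1}..v_k)\<close>
    and q: "q \<le> k"
    and JZA: "JZA \<in> carrier_mat q n" and JZC: "JZC \<in> carrier_mat (k - q) n"
    and Jbar: "Jbar \<in> carrier_mat k k" and Jinv: "Jinv \<in> carrier_mat k k"
    and Jbar_inv: "Jbar * Jinv = 1\<^sub>m k" "Jinv * Jbar = 1\<^sub>m k"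
    and JZ': "JZA @\<^sub>r JZC = Jbar * JZ"
    and JXA: "JXA \<in> carrier_mat q n" and JXC: "JXC \<in> carrier_mat (k - q) n"
    and JX': "JXA @\<^sub>r JXC = transpose_mat Jinv * JX"
    \<comment> \<open>glue code, compatible via pasting matrices S \<noteq> 0, T\<close>
    and HG: "HG \<in> carrier_mat rG nG"
    and S: "S \<in> carrier_mat nG n" and T: "T \<in> carrier_mat rX rG"
    and S_nz: "S \<noteq> 0\<^sub>m nG n"
    and compat: "HX * transpose_mat S = T * HG"
    and dR: "dR \<ge> 2"
  shows
   "(\<forall>\<gamma> U m.
      (U \<in> carrier_mat m n \<and> (\<forall>i < m. row U i \<in> set_plus (rs HZ) (rs FZ)) \<and>
       rs (JZA @\<^sub>r U) = set_mult (ker HG) S \<and>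
       \<gamma> \<in> carrier_mat (k - q) rG \<and> JXC * transpose_mat S = \<gamma> * HG) \<longrightarrow>
      (let N = NMM n nG rG dR;
           HXd = HX_MM dR HX HG T; HZd = HZ_MM dR HZ HG S;
           JXd = JX_MM dR JXC HG S \<gamma>; JZd = JZ_MM dR JZC HG
       in {restr n h | h. h \<in> rs HXd} = rs HX
        \<and> (\<forall>h \<in> rs HZ. ext0 N h \<in> rs HZd)
        \<and> (\<forall>x \<in> rs JX. JZA *\<^sub>v x = 0\<^sub>v q \<longrightarrow> (\<exists>x' \<in> rs JXd. restr n x' = x))
        \<and> (\<forall>z \<in> rs JZ. ext0 N z \<in> set_plus (rs JZd) (rs HZd))
        \<and> (\<forall>z \<in> rs JZA. ext0 N z \<in> rs HZd)
        \<and> min (ereal_of_enat (min (cdist HX JX) (cdist HZ JZ)) / ereal (mat_norm S))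
              (ereal (real dR))
            \<le> ereal_of_enat (min (cdist HXd JXd) (cdist HZd JZd))))
  \<and> (rs JZA \<subseteq> set_mult (ker HG) S \<longrightarrow>
      (let N = NMB n nG rG dR;
           HXd = HX_MB dR HX HG T; HZd = HZ_MB dR HZ HG S;
           JXd = JX_MB dR (JXA @\<^sub>r JXC) HG S; JZd = JZ_MB dR (JZA @\<^sub>r JZC) HG;
           ob = uoff n nG (dR - 1)
       in {restr n h | h. h \<in> rs HXd} = rs HX
        \<and> (\<forall>h \<in> rs HZ. ext0 N h \<in> rs HZd)
        \<and> (\<forall>x \<in> rs JX. \<exists>x' \<in> rs JXd. restr n x' = x)
        \<and> (\<forall>z \<in> rs JZ. ext0 N z \<in> rs JZd)
        \<and> (\<forall>z \<in> rs JZA. \<exists>g \<in> rs HZd.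
              \<forall>i < N. \<not> (ob \<le> i \<and> i < ob + nG) \<longrightarrow> (ext0 N z + g) $ i = 0)
        \<and> ereal_of_enat (min (cdist HX JX) (cdist HZ JZ)) / ereal (mat_norm S)
            \<le> ereal_of_enat (min (cdist HXd JXd) (cdist HZd JZd))))"
proof -
  interpret thm_ctx HX HZ HG S T n rX rZ nG rG dR JX JZ Jbar Jinv JZA JZC JXA JXC q k
    by unfold_locales (rule assms)+
  show ?thesis
  proof (intro conjI allI impI)
    fix \<gamma> :: "bit mat" and UU :: "bit mat" and m :: nat
    assume H: "UU \<in> carrier_mat m n \<and> (\<forall>i < m. row UU i \<in> set_plus (rs HZ) (rs FZ)) \<and>
       rs (JZA @\<^sub>r UU) = set_mult (ker HG) S \<and>
       \<gamma> \<in> carrier_mat (k - q) rG \<and> JXC * transpose_mat S = \<gamma> * HG"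
    then have UUc: "UU \<in> carrier_mat m n" and fd: "rs (JZA @\<^sub>r UU) = set_mult (ker HG) S"
      and g: "\<gamma> \<in> carrier_mat (k - q) rG" and gam: "JXC * transpose_mat S = \<gamma> * HG" by auto
    have sub: "rs JZA \<subseteq> set_mult (ker HG) S" using sub_from[OF UUc] fd by simp
    show "let N = NMM n nG rG dR;
           HXd = HX_MM dR HX HG T; HZd = HZ_MM dR HZ HG S;
           JXd = JX_MM dR JXC HG S \<gamma>; JZd = JZ_MM dR JZC HG
       in {restr n h | h. h \<in> rs HXd} = rs HX
        \<and> (\<forall>h \<in> rs HZ. ext0 N h \<in> rs HZd)
        \<and> (\<forall>x \<in> rs JX. JZA *\<^sub>v x = 0\<^sub>v q \<longrightarrow> (\<exists>x' \<in> rs JXd. restr n x' = x))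
        \<and> (\<forall>z \<in> rs JZ. ext0 N z \<in> set_plus (rs JZd) (rs HZd))
        \<and> (\<forall>z \<in> rs JZA. ext0 N z \<in> rs HZd)
        \<and> min (ereal_of_enat (min (cdist HX JX) (cdist HZ JZ)) / ereal (mat_norm S))
              (ereal (real dR))
            \<le> ereal_of_enat (min (cdist HXd JXd) (cdist HZd JZd))"
      unfolding Let_def
      using A1 A2 A3[OF g] A4[OF sub] A5[OF sub] A6[OF g gam] by blast
  next
    assume sub: "rs JZA \<subseteq> set_mult (ker HG) S"
    show "let N = NMB n nG rG dR;
           HXd = HX_MB dR HX HG T; HZd = HZ_MB dR HZ HG S;
           JXd = JX_MB dR (JXA @\<^sub>r JXC) HG S; JZd = JZ_MB dR (JZA @\<^sub>r JZC) HG;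
           ob = uoff n nG (dR - 1)
       in {restr n h | h. h \<in> rs HXd} = rs HX
        \<and> (\<forall>h \<in> rs HZ. ext0 N h \<in> rs HZd)
        \<and> (\<forall>x \<in> rs JX. \<exists>x' \<in> rs JXd. restr n x' = x)
        \<and> (\<forall>z \<in> rs JZ. ext0 N z \<in> rs JZd)
        \<and> (\<forall>z \<in> rs JZA. \<exists>g \<in> rs HZd.
              \<forall>i < N. \<not> (ob \<le> i \<and> i < ob + nG) \<longrightarrow> (ext0 N z + g) $ i = 0)
        \<and> ereal_of_enat (min (cdist HX JX) (cdist HZ JZ)) / ereal (mat_norm S)
            \<le> ereal_of_enat (min (cdist HXd JXd) (cdist HZd JZd))"
      unfolding Let_def
      using B1 B2 B3 B4 B5[OF sub] B6 by blast
  qed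
qed


end
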